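(* Let $Z$ be a reproducible multiset in which $0$ appears exactly $m_0\ge0$ times. Then the Shapiro–Shields function $\mathcal S_Z$ vanishes at the origin to order exactly $m_0$; i.e. $\mathcal S_Z^{(\ell)}(0)=0$ for $0\le\ell<m_0$ and $\mathcal S_Z^{(m_0)}(0)\ne0$.
   Context: Standing assumptions: $\Omega\subset\mathbb C$ is a domain with $0\in\Omega$, $\mathcal H$ is a Hilbert space of analytic functions on $\Omega$ with bounded point evaluations at points of $\Omega$, the shift $(Sf)(z)=zf(z)$ is bounded on $\mathcal H$, and the polynomials $\mathcal P$ are dense in $\mathcal H$. A point $\beta\in\mathbb C$ is reproducible of order $m\ge0$ if $p\mapsto p^{(m)}(\beta)$ on $\mathcal P$ extends to a bounded linear functional on $\mathcal H$, represented by $k_\beta^{(m)}\in\mathcal H$; $\operatorname{ro}(\beta)$ is the supremum of such $m$. A reproducible multiset is a finite multiset consisting of $0$ with multiplicity $m_0\ge0$ and distinct nonzero reproducible points $\beta_1,\dots,\beta_s$ with multiplicities $1\le m_j\le\operatorname{ro}(\beta_j)+1$. For vectors $u,v_1,\dots,v_N$, $D(u;v_1,\dots,v_N)$ is the formal determinant of the matrix with first row $(u,\langle u,v_1\rangle,\dots,\langle u,v_N\rangle)$ and $(i+1)$-st row $(v_i,\langle v_i,v_1\rangle,\dots,\langle v_i,v_N\rangle)$, expanded along the first column. The Shapiro–Shields function is $\mathcal S_Z=D(k_0^{(m_0)};k_0^{(m_0-1)},\dots,k_0,k_{\beta_1}^{(m_1-1)},\dots,k_{\beta_1},\dots,k_{\beta_s}^{(m_s-1)},\dots,k_{\beta_s})$.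 *)

theory Defs
  imports "HOL-Complex_Analysis.Complex_Analysis"
          "HOL-Computational_Algebra.Polynomial"
          "HOL-Library.Extended_Nat"
          "HOL-Library.Multiset"
begin

text \<open>Elements of the Hilbert space H are functions complex => complex, holomorphic on
  Omega and normalised to be 0 outside Omega (so that two elements agreeing on Omega are equal).
  The inner product ip is linear in the first argument, conjugate linear in the second.\<close>

definition hnorm :: "((complex \<Rightarrow> complex) \<Rightarrow> (complex \<Rightarrow> complex) \<Rightarrow> complex)
    \<Rightarrow> (complex \<Rightarrow> complex) \<Rightarrow> real" where
  "hnorm ip f = sqrt (Re (ip f f))"

definition polyfun :: "complex set \<Rightarrow> complex poly \<Rightarrow> complex \<Rightarrow> complex" where
  "polyfun Om p = (\<lambda>z. if z \<in> Om then poly p z else 0)"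

definition analytic_hilbert ::
  "complex set \<Rightarrow> (complex \<Rightarrow> complex) set
    \<Rightarrow> ((complex \<Rightarrow> complex) \<Rightarrow> (complex \<Rightarrow> complex) \<Rightarrow> complex) \<Rightarrow> bool" where
  "analytic_hilbert Om Hs ip \<longleftrightarrow>
     open Om \<and> connected Om \<and> 0 \<in> Om \<and>
     (\<forall>f\<in>Hs. f holomorphic_on Om \<and> (\<forall>z. z \<notin> Om \<longrightarrow> f z = 0)) \<and>
     (\<lambda>z. 0) \<in> Hs \<and>
     (\<forall>f\<in>Hs. \<forall>g\<in>Hs. (\<lambda>z. f z + g z) \<in> Hs) \<and>
     (\<forall>f\<in>Hs. \<forall>c. (\<lambda>z. c * f z) \<in> Hs) \<and>
     (\<forall>f\<in>Hs. \<forall>g\<in>Hs. \<forall>h\<in>Hs. ip (\<lambda>z. f z + g z) h = ip f h + ip g h) \<and>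
     (\<forall>f\<in>Hs. \<forall>g\<in>Hs. \<forall>c. ip (\<lambda>z. c * f z) g = c * ip f g) \<and>
     (\<forall>f\<in>Hs. \<forall>g\<in>Hs. ip f g = cnj (ip g f)) \<and>
     (\<forall>f\<in>Hs. Re (ip f f) \<ge> 0) \<and>
     (\<forall>f\<in>Hs. ip f f = 0 \<longrightarrow> f = (\<lambda>z. 0)) \<and>
     \<comment> \<open>completeness\<close>
     (\<forall>X :: nat \<Rightarrow> complex \<Rightarrow> complex. (\<forall>n. X n \<in> Hs) \<and>
          (\<forall>e>0. \<exists>N. \<forall>m\<ge>N. \<forall>n\<ge>N. hnorm ip (\<lambda>z. X m z - X n z) < e)
        \<longrightarrow> (\<exists>f\<in>Hs. \<forall>e>0. \<exists>N. \<forall>n\<ge>N. hnorm ip (\<lambda>z. X n z - f z) < e)) \<and>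
     \<comment> \<open>bounded point evaluations on Omega\<close>
     (\<forall>w\<in>Om. \<exists>C. \<forall>f\<in>Hs. cmod (f w) \<le> C * hnorm ip f) \<and>
     \<comment> \<open>bounded shift\<close>
     (\<forall>f\<in>Hs. (\<lambda>z. z * f z) \<in> Hs) \<and>
     (\<exists>C. \<forall>f\<in>Hs. hnorm ip (\<lambda>z. z * f z) \<le> C * hnorm ip f) \<and>
     \<comment> \<open>polynomials belong to H and are dense\<close>
     (\<forall>p. polyfun Om p \<in> Hs) \<and>
     (\<forall>f\<in>Hs. \<forall>e>0. \<exists>p. hnorm ip (\<lambda>z. f z - polyfun Om p z) < e)"

definition reproducible ::
  "complex set \<Rightarrow> (complex \<Rightarrow> complex) set
    \<Rightarrow> ((complex \<Rightarrow> complex) \<Rightarrow> (complex \<Rightarrow> complex) \<Rightarrow> complex) \<Rightarrow> complex \<Rightarrow> nat \<Rightarrow> bool" where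
  "reproducible Om Hs ip \<beta> m \<longleftrightarrow>
     (\<exists>\<Lambda>. (\<forall>f\<in>Hs. \<forall>g\<in>Hs. \<Lambda> (\<lambda>z. f z + g z) = \<Lambda> f + \<Lambda> g) \<and>
          (\<forall>f\<in>Hs. \<forall>c. \<Lambda> (\<lambda>z. c * f z) = c * \<Lambda> f) \<and>
          (\<exists>C. \<forall>f\<in>Hs. cmod (\<Lambda> f) \<le> C * hnorm ip f) \<and>
          (\<forall>p. \<Lambda> (polyfun Om p) = poly ((pderiv ^^ m) p) \<beta>))"

definition ro ::
  "complex set \<Rightarrow> (complex \<Rightarrow> complex) set
    \<Rightarrow> ((complex \<Rightarrow> complex) \<Rightarrow> (complex \<Rightarrow> complex) \<Rightarrow> complex) \<Rightarrow> complex \<Rightarrow> enat" where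
  "ro Om Hs ip \<beta> = Sup {enat m | m. reproducible Om Hs ip \<beta> m}"

definition kern ::
  "complex set \<Rightarrow> (complex \<Rightarrow> complex) set
    \<Rightarrow> ((complex \<Rightarrow> complex) \<Rightarrow> (complex \<Rightarrow> complex) \<Rightarrow> complex) \<Rightarrow> complex \<Rightarrow> nat
    \<Rightarrow> complex \<Rightarrow> complex" where
  "kern Om Hs ip \<beta> m =
     (THE k. k \<in> Hs \<and> (\<forall>p. poly ((pderiv ^^ m) p) \<beta> = ip (polyfun Om p) k))"

definition reproducible_multiset ::
  "complex set \<Rightarrow> (complex \<Rightarrow> complex) set
    \<Rightarrow> ((complex \<Rightarrow> complex) \<Rightarrow> (complex \<Rightarrow> complex) \<Rightarrow> complex) \<Rightarrow> complex multiset \<Rightarrow> bool" where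
  "reproducible_multiset Om Hs ip Z \<longleftrightarrow>
     (\<forall>\<beta>\<in>set_mset Z. \<beta> \<noteq> 0 \<longrightarrow>
        (\<exists>m. reproducible Om Hs ip \<beta> m) \<and> enat (count Z \<beta>) \<le> ro Om Hs ip \<beta> + 1)"

definition ldet :: "nat \<Rightarrow> (nat \<Rightarrow> nat \<Rightarrow> complex) \<Rightarrow> complex" where
  "ldet n A = (\<Sum>p\<in>{p. p permutes {..<n}}. of_int (sign p) * (\<Prod>i<n. A i (p i)))"

text \<open>Formal determinant D(u; v_1,...,v_N), expanded along the first column (0-based lists).\<close>
definition formal_det ::
  "((complex \<Rightarrow> complex) \<Rightarrow> (complex \<Rightarrow> complex) \<Rightarrow> complex)
    \<Rightarrow> (complex \<Rightarrow> complex) \<Rightarrow> (complex \<Rightarrow> complex) list \<Rightarrow> complex \<Rightarrow> complex" where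
  "formal_det ip u vs =
     (let ws = u # vs; N = length vs in
      (\<lambda>z. \<Sum>i\<le>N. (-1) ^ i *
             ldet N (\<lambda>r j. ip (ws ! (if r < i then r else Suc r)) (vs ! j)) * (ws ! i) z))"

text \<open>Shapiro--Shields function. The nonzero points are enumerated in some fixed order;
  the formal determinant does not depend on this order.\<close>
definition shapiro_shields ::
  "complex set \<Rightarrow> (complex \<Rightarrow> complex) set
    \<Rightarrow> ((complex \<Rightarrow> complex) \<Rightarrow> (complex \<Rightarrow> complex) \<Rightarrow> complex) \<Rightarrow> complex multiset
    \<Rightarrow> complex \<Rightarrow> complex" where
  "shapiro_shields Om Hs ip Z =
     (let m0 = count Z 0;
          bs = (SOME bs. distinct bs \<and> set bs = set_mset Z - {0});
          k = kern Om Hs ip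
      in formal_det ip (k 0 m0)
           (rev (map (k 0) [0..<m0]) @
            concat (map (\<lambda>b. rev (map (k b) [0..<count Z b])) bs)))"

end

theory Submission
  imports Defs "Jordan_Normal_Form.Determinant"
begin

lemma AHD: assumes "analytic_hilbert Om Hs ip"
  shows "open Om" "connected Om" "0 \<in> Om"
   "\<forall>f\<in>Hs. f holomorphic_on Om \<and> (\<forall>z. z \<notin> Om \<longrightarrow> f z = 0)"
   "(\<lambda>z. 0) \<in> Hs"
   "\<forall>f\<in>Hs. \<forall>g\<in>Hs. (\<lambda>z. f z + g z) \<in> Hs"
   "\<forall>f\<in>Hs. \<forall>c. (\<lambda>z. c * f z) \<in> Hs"
   "\<forall>f\<in>Hs. \<forall>g\<in>Hs. \<forall>h\<in>Hs. ip (\<lambda>z. f z + g z) h = ip f h + ip g h"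
   "\<forall>f\<in>Hs. \<forall>g\<in>Hs. \<forall>c. ip (\<lambda>z. c * f z) g = c * ip f g"
   "\<forall>f\<in>Hs. \<forall>g\<in>Hs. ip f g = cnj (ip g f)"
   "\<forall>f\<in>Hs. Re (ip f f) \<ge> 0"
   "\<forall>f\<in>Hs. ip f f = 0 \<longrightarrow> f = (\<lambda>z. 0)"
   "\<forall>X :: nat \<Rightarrow> complex \<Rightarrow> complex. (\<forall>n. X n \<in> Hs) \<and>
          (\<forall>e>0. \<exists>N. \<forall>m\<ge>N. \<forall>n\<ge>N. hnorm ip (\<lambda>z. X m z - X n z) < e)
        \<longrightarrow> (\<exists>f\<in>Hs. \<forall>e>0. \<exists>N. \<forall>n\<ge>N. hnorm ip (\<lambda>z. X n z - f z) < e)"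
   "\<forall>w\<in>Om. \<exists>C. \<forall>f\<in>Hs. cmod (f w) \<le> C * hnorm ip f"
   "\<forall>f\<in>Hs. (\<lambda>z. z * f z) \<in> Hs"
   "\<exists>C. \<forall>f\<in>Hs. hnorm ip (\<lambda>z. z * f z) \<le> C * hnorm ip f"
   "\<forall>p. polyfun Om p \<in> Hs"
   "\<forall>f\<in>Hs. \<forall>e>0. \<exists>p. hnorm ip (\<lambda>z. f z - polyfun Om p z) < e"
  using assms unfolding analytic_hilbert_def apply - by (elim conjE, assumption)+

lemma poly_higher_deriv: "(deriv ^^ l) (poly p) = poly ((pderiv ^^ l) (p :: complex poly))"
proof (induction l)
  case 0 then show ?case by simp
next
  case (Suc l)
  have "(deriv ^^ Suc l) (poly p) = deriv (poly ((pderiv ^^ l) p))" using Suc by simp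
  also have "\<dots> = poly (pderiv ((pderiv ^^ l) p))"
    by (rule ext, rule DERIV_imp_deriv, rule poly_DERIV)
  finally show ?case by simp
qed

lemma pderiv_x_mult: "pderiv ([:0, 1:] * q) = q + [:0, 1:] * pderiv (q :: complex poly)"
  by (simp add: pderiv_mult pderiv_pCons)

lemma higher_pderiv_x_mult:
  "(pderiv ^^ Suc n) ([:0, 1:] * p) = [:0, 1:] * (pderiv ^^ Suc n) p + Polynomial.smult (of_nat (Suc n)) ((pderiv ^^ n) (p :: complex poly))"
proof (induction n)
  case 0 then show ?case by (simp add: pderiv_pCons add.commute)
next
  case (Suc n)
  have "(pderiv ^^ Suc (Suc n)) ([:0, 1:] * p) = pderiv ((pderiv ^^ Suc n) ([:0, 1:] * p))" by simp
  also have "\<dots> = pderiv ([:0, 1:] * (pderiv ^^ Suc n) p) + Polynomial.smult (of_nat (Suc n)) (pderiv ((pderiv ^^ n) p))"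
    unfolding Suc by (simp add: pderiv_add pderiv_smult del: of_nat_Suc)
  also have "\<dots> = (pderiv ^^ Suc n) p + [:0, 1:] * (pderiv ^^ Suc (Suc n)) p + Polynomial.smult (of_nat (Suc n)) ((pderiv ^^ Suc n) p)"
    unfolding pderiv_x_mult by simp
  also have "\<dots> = [:0, 1:] * (pderiv ^^ Suc (Suc n)) p + Polynomial.smult (of_nat (Suc (Suc n))) ((pderiv ^^ Suc n) p)"
  proof -
    have "Polynomial.smult (of_nat (Suc (Suc n))) q = q + Polynomial.smult (of_nat (Suc n)) (q :: complex poly)" for q
      by (simp only: of_nat_Suc[of "Suc n"] smult_add_left smult_1_left)
    then show ?thesis by (simp add: algebra_simps)
  qed
  finally show ?case .
qed

lemma pderiv_root_power:
  "pderiv ([:-c, 1:] ^ Suc m * q) =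
     [:-c, 1:] ^ m * (Polynomial.smult (of_nat (Suc m)) q + [:-c, 1:] * pderiv (q :: complex poly))"
proof -
  have d: "pderiv [:-c, 1:] = (1 :: complex poly)" by (simp add: pderiv_pCons)
  have "pderiv ([:-c, 1:] ^ Suc m * q) = [:-c, 1:] ^ Suc m * pderiv q + q * pderiv ([:-c, 1:] ^ Suc m)"
    by (rule pderiv_mult)
  also have "pderiv ([:-c, 1:] ^ Suc m) = Polynomial.smult (of_nat (Suc m)) ([:-c, 1:] ^ m)"
    unfolding pderiv_power_Suc d by simp
  finally show ?thesis by (simp add: algebra_simps)
qed

lemma higher_pderiv_root_power:
  "\<exists>r. (pderiv ^^ k) ([:-c, 1:] ^ (n + k) * q) = [:-c, 1:] ^ n * r \<and>
       poly r c = pochhammer (of_nat (Suc n)) k * poly (q :: complex poly) c"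
proof (induction k arbitrary: q)
  case 0 then show ?case by auto
next
  case (Suc k)
  define q' where "q' = Polynomial.smult (of_nat (Suc (n + k))) q + [:-c, 1:] * pderiv q"
  have "(pderiv ^^ Suc k) ([:-c, 1:] ^ (n + Suc k) * q) = (pderiv ^^ k) (pderiv ([:-c, 1:] ^ Suc (n + k) * q))"
    by (simp only: funpow_Suc_right comp_apply add_Suc_right)
  also have "pderiv ([:-c, 1:] ^ Suc (n + k) * q) = [:-c, 1:] ^ (n + k) * q'"
    unfolding q'_def by (rule pderiv_root_power)
  finally have e: "(pderiv ^^ Suc k) ([:-c, 1:] ^ (n + Suc k) * q) = (pderiv ^^ k) ([:-c, 1:] ^ (n + k) * q')" .
  obtain r where r: "(pderiv ^^ k) ([:-c, 1:] ^ (n + k) * q') = [:-c, 1:] ^ n * r"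
    "poly r c = pochhammer (of_nat (Suc n)) k * poly q' c" using Suc.IH[of q'] by blast
  have "poly q' c = of_nat (Suc (n + k)) * poly q c" unfolding q'_def by simp
  then have "poly r c = pochhammer (of_nat (Suc n)) (Suc k) * poly q c"
    unfolding r(2) pochhammer_Suc by (simp add: algebra_simps)
  then show ?case using e r(1) by (intro exI[of _ r]) simp
qed

lemma higher_pderiv_vanish:
  assumes "[:-c, 1:] ^ M dvd p" "a < M"
  shows "poly ((pderiv ^^ a) p) c = (0 :: complex)"
proof -
  obtain q where q: "p = [:-c, 1:] ^ M * q" using assms(1) by (auto elim: dvdE)
  have M: "M = (M - a) + a" using assms(2) by simp
  obtain r where r: "(pderiv ^^ a) ([:-c, 1:] ^ ((M - a) + a) * q) = [:-c, 1:] ^ (M - a) * r"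
    using higher_pderiv_root_power[of a c "M - a" q] by blast
  have "(pderiv ^^ a) p = [:-c, 1:] ^ (M - a) * r" using r M q by metis
  then show ?thesis using assms(2) by (simp add: poly_power)
qed

lemma higher_pderiv_value:
  "poly ((pderiv ^^ a) ([:-c, 1:] ^ a * q)) c = fact a * poly (q :: complex poly) c"
proof -
  obtain r where r: "(pderiv ^^ a) ([:-c, 1:] ^ (0 + a) * q) = [:-c, 1:] ^ 0 * r"
    "poly r c = pochhammer (of_nat (Suc 0)) a * poly q c"
    using higher_pderiv_root_power[of a c 0 q] by blast
  then show ?thesis by (simp add: pochhammer_fact)
qed

lemma hermite_indep:
  fixes ps :: "(complex \<times> nat) list" and x :: "nat \<Rightarrow> complex"
  assumes dist: "distinct ps" and j0: "j0 < length ps" "x j0 \<noteq> 0"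
  shows "\<exists>p. (\<Sum>j<length ps. x j * poly ((pderiv ^^ snd (ps ! j)) p) (fst (ps ! j))) \<noteq> 0"
proof -
  define n where "n = length ps"
  define b0 where "b0 = fst (ps ! j0)"
  define J where "J = {j. j < n \<and> x j \<noteq> 0 \<and> fst (ps ! j) = b0}"
  have finJ: "finite J" unfolding J_def by auto
  have j0J: "j0 \<in> J" unfolding J_def b0_def n_def using j0 by auto
  define a0 where "a0 = Max ((\<lambda>j. snd (ps ! j)) ` J)"
  have "a0 \<in> (\<lambda>j. snd (ps ! j)) ` J" unfolding a0_def using finJ j0J by (intro Max_in) auto
  then obtain j1 where j1: "j1 \<in> J" "snd (ps ! j1) = a0" by auto
  have a0max: "snd (ps ! j) \<le> a0" if "j \<in> J" for j unfolding a0_def using finJ that by (intro Max_ge) auto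
  define P where "P = fst ` set ps - {b0}"
  have finP: "finite P" unfolding P_def by auto
  define Mx where "Mx = Suc (Max (snd ` set ps))"
  have ltM: "snd (ps ! j) < Mx" if "j < n" for j
  proof -
    have "snd (ps ! j) \<in> snd ` set ps" using that unfolding n_def by auto
    then have "snd (ps ! j) \<le> Max (snd ` set ps)" by (intro Max_ge) auto
    then show ?thesis unfolding Mx_def by simp
  qed
  define q where "q = (\<Prod>c\<in>P. [:-c, 1:] ^ Mx)"
  have qb0: "poly q b0 \<noteq> 0"
  proof -
    have "poly q b0 = (\<Prod>c\<in>P. (b0 - c) ^ Mx)" unfolding q_def poly_prod by (simp add: poly_power)
    moreover have "(\<Prod>c\<in>P. (b0 - c) ^ Mx) \<noteq> 0" using finP unfolding P_def by (subst prod_zero_iff) auto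
    ultimately show ?thesis by simp
  qed
  define p where "p = [:-b0, 1:] ^ a0 * q"
  define tm where "tm = (\<lambda>j. x j * poly ((pderiv ^^ snd (ps ! j)) p) (fst (ps ! j)))"
  have zero: "tm j = 0" if jn: "j < n" "j \<noteq> j1" for j
  proof (cases "fst (ps ! j) = b0")
    case False
    define c where "c = fst (ps ! j)"
    have cP: "c \<in> P" unfolding P_def c_def using False jn unfolding n_def by auto
    have "[:-c, 1:] ^ Mx dvd q" unfolding q_def using finP cP by (rule dvd_prodI)
    then have "[:-c, 1:] ^ Mx dvd p" unfolding p_def by simp
    then have "poly ((pderiv ^^ snd (ps ! j)) p) c = 0" using ltM[OF jn(1)] by (rule higher_pderiv_vanish)
    then show ?thesis unfolding tm_def c_def by simp
  next
    case True
    show ?thesis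
    proof (cases "x j = 0")
      case True then show ?thesis unfolding tm_def by simp
    next
      case False
      then have jJ: "j \<in> J" unfolding J_def using jn True by auto
      have "snd (ps ! j) \<noteq> a0"
      proof
        assume "snd (ps ! j) = a0"
        then have "ps ! j = ps ! j1" using True j1 unfolding J_def by (simp add: prod_eq_iff)
        moreover have "j1 < length ps" using j1 unfolding J_def n_def by auto
        ultimately have "j = j1" using dist jn unfolding n_def by (simp add: nth_eq_iff_index_eq)
        then show False using jn by simp
      qed
      then have lt: "snd (ps ! j) < a0" using a0max[OF jJ] by simp
      have "[:-b0, 1:] ^ a0 dvd p" unfolding p_def by simp
      then have "poly ((pderiv ^^ snd (ps ! j)) p) b0 = 0" using lt by (rule higher_pderiv_vanish)
      then show ?thesis unfolding tm_def using True by simp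
    qed
  qed
  have j1n: "j1 < n" "x j1 \<noteq> 0" "fst (ps ! j1) = b0" using j1 unfolding J_def by auto
  have "tm j1 = x j1 * (fact a0 * poly q b0)"
    unfolding tm_def p_def using j1n j1(2) higher_pderiv_value by simp
  then have t1: "tm j1 \<noteq> 0" using j1n qb0 by simp
  have "(\<Sum>j<n. tm j) = (\<Sum>j\<in>{j1}. tm j)"
    using zero j1n by (intro sum.mono_neutral_right) auto
  then have "(\<Sum>j<n. tm j) \<noteq> 0" using t1 by simp
  then show ?thesis unfolding tm_def n_def by blast
qed

lemma ldet_det: "ldet n A = det (mat n n (\<lambda>(i, j). A i j))"
proof -
  have "det (mat n n (\<lambda>(i, j). A i j)) =
     (\<Sum>p\<in>{p. p permutes {0..<n}}. signof p * (\<Prod>i = 0..<n. mat n n (\<lambda>(i, j). A i j) $$ (i, p i)))"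
    unfolding det_def by simp
  also have "\<dots> = (\<Sum>p\<in>{p. p permutes {..<n}}. of_int (sign p) * (\<Prod>i<n. A i (p i)))"
  proof (rule sum.cong)
    show "{p. p permutes {0..<n}} = {p. p permutes {..<n}}" by (simp add: atLeast0LessThan)
    fix p assume "p \<in> {p. p permutes {..<n}}"
    then have p: "p permutes {..<n}" by simp
    have "(\<Prod>i = 0..<n. mat n n (\<lambda>(i, j). A i j) $$ (i, p i)) = (\<Prod>i<n. A i (p i))"
      unfolding atLeast0LessThan
    proof (rule prod.cong)
      fix i assume "i \<in> {..<n}"
      then have "p i < n" using permutes_in_image[OF p] by simp
      then show "mat n n (\<lambda>(i, j). A i j) $$ (i, p i) = A i (p i)" using \<open>i \<in> {..<n}\<close> by simp
    qed simp
    then show "signof p * (\<Prod>i = 0..<n. mat n n (\<lambda>(i, j). A i j) $$ (i, p i)) = of_int (sign p) * (\<Prod>i<n. A i (p i))"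
      by simp
  qed
  finally show ?thesis unfolding ldet_def by simp
qed

lemma distinct_concat_pairs:
  "distinct bs \<Longrightarrow> distinct (concat (map (\<lambda>b. rev (map (Pair b) [0..<c b])) (bs :: complex list)))"
  by (induction bs) (auto simp: distinct_map inj_on_def)

locale AH =
  fixes Om :: "complex set" and Hs :: "(complex \<Rightarrow> complex) set"
    and ip :: "(complex \<Rightarrow> complex) \<Rightarrow> (complex \<Rightarrow> complex) \<Rightarrow> complex"
  assumes ah: "analytic_hilbert Om Hs ip"
begin

lemmas A = AHD[OF ah]

lemma open_Om: "open Om" and conn_Om: "connected Om" and zero_Om: "0 \<in> Om"
  using A(1) A(2) A(3) by auto

lemma hol: "f \<in> Hs \<Longrightarrow> f holomorphic_on Om" using A(4) by blast
lemma out0: "f \<in> Hs \<Longrightarrow> z \<notin> Om \<Longrightarrow> f z = 0" using A(4) by blast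
lemma zero_in: "(\<lambda>z. 0) \<in> Hs" using A(5) .
lemma add_in: "f \<in> Hs \<Longrightarrow> g \<in> Hs \<Longrightarrow> (\<lambda>z. f z + g z) \<in> Hs" using A(6) by blast
lemma scale_in: "f \<in> Hs \<Longrightarrow> (\<lambda>z. c * f z) \<in> Hs" using A(7) by blast
lemma ip_add: "f \<in> Hs \<Longrightarrow> g \<in> Hs \<Longrightarrow> h \<in> Hs \<Longrightarrow> ip (\<lambda>z. f z + g z) h = ip f h + ip g h" using A(8) by blast
lemma ip_scale: "f \<in> Hs \<Longrightarrow> g \<in> Hs \<Longrightarrow> ip (\<lambda>z. c * f z) g = c * ip f g" using A(9) by blast
lemma ip_cnj: "f \<in> Hs \<Longrightarrow> g \<in> Hs \<Longrightarrow> ip f g = cnj (ip g f)" using A(10) by blast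
lemma ip_pos: "f \<in> Hs \<Longrightarrow> Re (ip f f) \<ge> 0" using A(11) by blast
lemma ip_def0: "f \<in> Hs \<Longrightarrow> ip f f = 0 \<Longrightarrow> f = (\<lambda>z. 0)" using A(12) by blast
lemma complete: fixes X :: "nat \<Rightarrow> complex \<Rightarrow> complex"
  assumes a1: "\<And>n. X n \<in> Hs" and a2: "\<And>e. e>0 \<Longrightarrow> \<exists>N. \<forall>m\<ge>N. \<forall>n\<ge>N. hnorm ip (\<lambda>z. X m z - X n z) < e"
  shows "\<exists>f\<in>Hs. \<forall>e>0. \<exists>N. \<forall>n\<ge>N. hnorm ip (\<lambda>z. X n z - f z) < e"
proof (rule A(13)[THEN spec, of X, THEN mp], intro conjI allI impI)
  show "X n \<in> Hs" for n by (rule a1)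
  show "\<exists>N. \<forall>m\<ge>N. \<forall>n\<ge>N. hnorm ip (\<lambda>z. X m z - X n z) < e" if "e > 0" for e using a2 that .
qed
lemma pointeval: "w \<in> Om \<Longrightarrow> \<exists>C. \<forall>f\<in>Hs. cmod (f w) \<le> C * hnorm ip f" using A(14) by blast
lemma shift_in: "f \<in> Hs \<Longrightarrow> (\<lambda>z. z * f z) \<in> Hs" using A(15) by blast
lemma shift_bdd: "\<exists>C. \<forall>f\<in>Hs. hnorm ip (\<lambda>z. z * f z) \<le> C * hnorm ip f" using A(16) .
lemma poly_in: "polyfun Om p \<in> Hs" using A(17) by blast
lemma dense: "f \<in> Hs \<Longrightarrow> e > 0 \<Longrightarrow> \<exists>p. hnorm ip (\<lambda>z. f z - polyfun Om p z) < e" using A(18) by blast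

lemma neg_in: "f \<in> Hs \<Longrightarrow> (\<lambda>z. - f z) \<in> Hs"
  using scale_in[of f "-1"] by simp

lemma diff_in: "f \<in> Hs \<Longrightarrow> g \<in> Hs \<Longrightarrow> (\<lambda>z. f z - g z) \<in> Hs"
  using add_in[OF _ neg_in[of g], of f] by simp

lemma sum_in: "finite A \<Longrightarrow> (\<And>i. i \<in> A \<Longrightarrow> f i \<in> Hs) \<Longrightarrow> (\<lambda>z. \<Sum>i\<in>A. c i * f i z) \<in> Hs"
proof (induction A rule: finite_induct)
  case empty then show ?case using zero_in by simp
next
  case (insert x F)
  have "(\<lambda>z. c x * f x z + (\<Sum>i\<in>F. c i * f i z)) \<in> Hs"
    using insert by (intro add_in scale_in) auto
  then show ?case using insert by simp
qed

lemma ip_zero_left: "g \<in> Hs \<Longrightarrow> ip (\<lambda>z. 0) g = 0"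
  using ip_scale[OF zero_in, of g 0] by simp

lemma ip_add_right: assumes "f \<in> Hs" "g \<in> Hs" "h \<in> Hs" shows "ip h (\<lambda>z. f z + g z) = ip h f + ip h g"
proof -
  have "ip h (\<lambda>z. f z + g z) = cnj (ip (\<lambda>z. f z + g z) h)" using assms by (intro ip_cnj add_in)
  also have "\<dots> = cnj (ip f h) + cnj (ip g h)" using assms by (simp add: ip_add)
  also have "\<dots> = ip h f + ip h g" using assms by (simp add: ip_cnj[of h f] ip_cnj[of h g])
  finally show ?thesis .
qed

lemma ip_scale_right: assumes "f \<in> Hs" "g \<in> Hs" shows "ip f (\<lambda>z. c * g z) = cnj c * ip f g"
proof -
  have "ip f (\<lambda>z. c * g z) = cnj (ip (\<lambda>z. c * g z) f)" using assms by (intro ip_cnj scale_in)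
  also have "\<dots> = cnj c * cnj (ip g f)" using assms by (simp add: ip_scale)
  also have "\<dots> = cnj c * ip f g" using assms by (simp add: ip_cnj[of f g])
  finally show ?thesis .
qed

lemma ip_zero_right: "f \<in> Hs \<Longrightarrow> ip f (\<lambda>z. 0) = 0"
  using ip_scale_right[OF _ zero_in, of f 0] by simp

lemma ip_diff: "f \<in> Hs \<Longrightarrow> g \<in> Hs \<Longrightarrow> h \<in> Hs \<Longrightarrow> ip (\<lambda>z. f z - g z) h = ip f h - ip g h"
  using ip_add[OF _ neg_in[of g], of f h] ip_scale[of g h "-1"] by simp

lemma ip_diff_right: "f \<in> Hs \<Longrightarrow> g \<in> Hs \<Longrightarrow> h \<in> Hs \<Longrightarrow> ip h (\<lambda>z. f z - g z) = ip h f - ip h g"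
  using ip_add_right[OF _ neg_in[of g], of f h] ip_scale_right[of h g "-1"] by simp

lemma ip_sum_left: "finite A \<Longrightarrow> (\<And>i. i \<in> A \<Longrightarrow> f i \<in> Hs) \<Longrightarrow> h \<in> Hs \<Longrightarrow>
   ip (\<lambda>z. \<Sum>i\<in>A. c i * f i z) h = (\<Sum>i\<in>A. c i * ip (f i) h)"
proof (induction A rule: finite_induct)
  case empty then show ?case using ip_zero_left by simp
next
  case (insert x F)
  have "ip (\<lambda>z. c x * f x z + (\<Sum>i\<in>F. c i * f i z)) h = ip (\<lambda>z. c x * f x z) h + ip (\<lambda>z. (\<Sum>i\<in>F. c i * f i z)) h"
    using insert by (intro ip_add scale_in sum_in) auto
  then show ?case using insert ip_scale by simp
qed

lemma ip_sum_right: "finite A \<Longrightarrow> (\<And>i. i \<in> A \<Longrightarrow> f i \<in> Hs) \<Longrightarrow> h \<in> Hs \<Longrightarrow>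
   ip h (\<lambda>z. \<Sum>i\<in>A. c i * f i z) = (\<Sum>i\<in>A. cnj (c i) * ip h (f i))"
proof (induction A rule: finite_induct)
  case empty then show ?case using ip_zero_right by simp
next
  case (insert x F)
  have "ip h (\<lambda>z. c x * f x z + (\<Sum>i\<in>F. c i * f i z)) = ip h (\<lambda>z. c x * f x z) + ip h (\<lambda>z. (\<Sum>i\<in>F. c i * f i z))"
    using insert by (intro ip_add_right scale_in sum_in) auto
  then show ?case using insert ip_scale_right by simp
qed

definition N :: "(complex \<Rightarrow> complex) \<Rightarrow> real" where "N f = hnorm ip f"
definition Q :: "(complex \<Rightarrow> complex) \<Rightarrow> real" where "Q f = Re (ip f f)"

lemma ip_self_real: assumes "f \<in> Hs" shows "ip f f = of_real (Q f)"
proof -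
  have "ip f f = cnj (ip f f)" using ip_cnj[OF assms assms] .
  then have "Im (ip f f) = 0" by (simp add: complex_eq_iff)
  then show ?thesis by (simp add: complex_eq_iff Q_def)
qed

lemma Q_nonneg: "f \<in> Hs \<Longrightarrow> Q f \<ge> 0" using ip_pos unfolding Q_def by auto
lemma N_nonneg: "f \<in> Hs \<Longrightarrow> N f \<ge> 0" using ip_pos unfolding N_def hnorm_def by auto
lemma N_sq: "f \<in> Hs \<Longrightarrow> (N f)^2 = Q f" using ip_pos unfolding N_def hnorm_def Q_def by auto
lemma N_Q: "N f = sqrt (Q f)" unfolding N_def hnorm_def Q_def by simp

lemma Q_zero: "f \<in> Hs \<Longrightarrow> Q f = 0 \<Longrightarrow> f = (\<lambda>z. 0)"
  using ip_self_real ip_def0 by auto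
lemma N_zero: "f \<in> Hs \<Longrightarrow> N f = 0 \<Longrightarrow> f = (\<lambda>z. 0)"
  using Q_zero N_Q by simp

lemma expand: assumes "f \<in> Hs" "g \<in> Hs"
  shows "ip (\<lambda>z. f z - t * g z) (\<lambda>z. f z - t * g z) = ip f f - cnj t * ip f g - t * ip g f + t * cnj t * ip g g"
proof -
  have tg: "(\<lambda>z. t * g z) \<in> Hs" using assms scale_in by auto
  have d: "(\<lambda>z. f z - t * g z) \<in> Hs" using diff_in[OF assms(1) tg] .
  have "ip (\<lambda>z. f z - t * g z) (\<lambda>z. f z - t * g z) = ip f (\<lambda>z. f z - t * g z) - ip (\<lambda>z. t * g z) (\<lambda>z. f z - t * g z)"
    using ip_diff[OF assms(1) tg d] .
  also have "\<dots> = ip f f - cnj t * ip f g - (t * (ip g f - cnj t * ip g g))"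
    using assms tg by (simp add: ip_diff_right ip_scale ip_scale_right algebra_simps)
  finally show ?thesis by (simp add: algebra_simps)
qed

lemma cauchy_schwarz: assumes "f \<in> Hs" "g \<in> Hs" shows "cmod (ip f g) \<le> N f * N g"
proof (cases "Q g = 0")
  case True
  then have "g = (\<lambda>z. 0)" using Q_zero assms by auto
  then show ?thesis using ip_zero_right assms N_nonneg by simp
next
  case False
  then have qg: "Q g > 0" using Q_nonneg assms by fastforce
  define c where "c = ip f g"
  define q where "q = Q g"
  define t where "t = c / of_real q"
  have e0: "ip (\<lambda>z. f z - t * g z) (\<lambda>z. f z - t * g z) = ip f f - cnj t * ip f g - t * ip g f + t * cnj t * ip g g"
    using expand[OF assms, of t] .
  have e: "ip (\<lambda>z. f z - t * g z) (\<lambda>z. f z - t * g z) = of_real (Q f) - cnj t * c - t * cnj c + t * cnj t * of_real q"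
    unfolding e0 c_def q_def ip_self_real[OF assms(1)] ip_self_real[OF assms(2)] ip_cnj[OF assms(2) assms(1)] ..
  have sq: "c * cnj c = of_real ((cmod c)^2)" using complex_norm_square[of c] by simp
  have 1: "cnj t * c = of_real ((cmod c)^2 / q)" unfolding t_def using sq by (simp add: mult.commute)
  have 2: "t * cnj c = of_real ((cmod c)^2 / q)" unfolding t_def using sq by simp
  have 3: "t * cnj t * of_real q = of_real ((cmod c)^2 / q)" unfolding t_def using sq qg q_def
    by (simp add: power2_eq_square)
  have "0 \<le> Re (ip (\<lambda>z. f z - t * g z) (\<lambda>z. f z - t * g z))"
    using ip_pos diff_in scale_in assms by blast
  also have "\<dots> = Q f - (cmod c)^2 / q"
    unfolding e 1 2 3 by simp
  finally have "(cmod c)^2 \<le> Q f * Q g" using qg q_def by (simp add: field_simps)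
  also have "\<dots> = (N f * N g)^2" using N_sq assms by (simp add: power_mult_distrib)
  finally have "(cmod c)^2 \<le> (N f * N g)^2" .
  moreover have "0 \<le> N f * N g" using N_nonneg[OF assms(1)] N_nonneg[OF assms(2)] by simp
  ultimately have "cmod c \<le> N f * N g" by (rule power2_le_imp_le)
  then show ?thesis unfolding c_def .
qed


lemma Q_add: assumes "f \<in> Hs" "g \<in> Hs"
  shows "Q (\<lambda>z. f z + g z) = Q f + Q g + 2 * Re (ip f g)"
proof -
  have fg: "(\<lambda>z. f z + g z) \<in> Hs" using assms by (rule add_in)
  have "ip (\<lambda>z. f z + g z) (\<lambda>z. f z + g z) = ip f (\<lambda>z. f z + g z) + ip g (\<lambda>z. f z + g z)"
    using ip_add[OF assms fg] .
  also have "\<dots> = ip f f + ip f g + (ip g f + ip g g)"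
    using ip_add_right[OF assms assms(1)] ip_add_right[OF assms assms(2)] by simp
  finally have "ip (\<lambda>z. f z + g z) (\<lambda>z. f z + g z) = ip f f + ip f g + (cnj (ip f g) + ip g g)"
    using ip_cnj[OF assms(2) assms(1)] by simp
  then show ?thesis unfolding Q_def by simp
qed

lemma Q_scale: assumes "f \<in> Hs" shows "Q (\<lambda>z. c * f z) = (cmod c)^2 * Q f"
proof -
  have "ip (\<lambda>z. c * f z) (\<lambda>z. c * f z) = c * (cnj c * ip f f)"
    using ip_scale[OF assms scale_in[OF assms]] ip_scale_right[OF assms assms] by simp
  also have "\<dots> = of_real ((cmod c)^2 * Q f)"
    using complex_norm_square[of c] ip_self_real[OF assms] by (simp add: mult.assoc)
  finally show ?thesis unfolding Q_def by simp
qed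

lemma N_scale: assumes "f \<in> Hs" shows "N (\<lambda>z. c * f z) = cmod c * N f"
  unfolding N_Q Q_scale[OF assms] by (simp add: real_sqrt_mult)

lemma N_neg: assumes "f \<in> Hs" shows "N (\<lambda>z. - f z) = N f"
  using N_scale[OF assms, of "-1"] by simp

lemma N_sym: assumes "f \<in> Hs" "g \<in> Hs" shows "N (\<lambda>z. f z - g z) = N (\<lambda>z. g z - f z)"
  using N_neg[OF diff_in[OF assms(2) assms(1)]] by simp

lemma N_triangle: assumes "f \<in> Hs" "g \<in> Hs" shows "N (\<lambda>z. f z + g z) \<le> N f + N g"
proof -
  have "Q (\<lambda>z. f z + g z) \<le> Q f + Q g + 2 * (N f * N g)"
    unfolding Q_add[OF assms] using complex_Re_le_cmod[of "ip f g"] cauchy_schwarz[OF assms] by linarith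
  also have "\<dots> = (N f + N g)^2" using N_sq[OF assms(1)] N_sq[OF assms(2)] by (simp add: power2_sum)
  finally have "(N (\<lambda>z. f z + g z))^2 \<le> (N f + N g)^2" using N_sq[OF add_in[OF assms]] by simp
  moreover have "0 \<le> N f + N g" using N_nonneg[OF assms(1)] N_nonneg[OF assms(2)] by simp
  ultimately show ?thesis by (rule power2_le_imp_le)
qed

lemma N_triangle3: assumes "f \<in> Hs" "g \<in> Hs" "h \<in> Hs"
  shows "N (\<lambda>z. f z - h z) \<le> N (\<lambda>z. f z - g z) + N (\<lambda>z. g z - h z)"
  using N_triangle[OF diff_in[OF assms(1) assms(2)] diff_in[OF assms(2) assms(3)]] by simp

lemma ip_cont: assumes "f \<in> Hs" "g \<in> Hs" "h \<in> Hs"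
  shows "cmod (ip f h - ip g h) \<le> N (\<lambda>z. f z - g z) * N h"
  using cauchy_schwarz[OF diff_in[OF assms(1) assms(2)] assms(3)] ip_diff[OF assms] by simp

lemma parallelogram: assumes "f \<in> Hs" "g \<in> Hs"
  shows "Q (\<lambda>z. f z + g z) + Q (\<lambda>z. f z - g z) = 2 * Q f + 2 * Q g"
proof -
  have ng: "(\<lambda>z. - g z) \<in> Hs" using neg_in[OF assms(2)] .
  have "Q (\<lambda>z. f z - g z) = Q (\<lambda>z. f z + - g z)" by simp
  also have "\<dots> = Q f + Q (\<lambda>z. - g z) + 2 * Re (ip f (\<lambda>z. - g z))" by (rule Q_add[OF assms(1) ng])
  also have "Q (\<lambda>z. - g z) = Q g" using Q_scale[OF assms(2), of "-1"] by simp
  also have "ip f (\<lambda>z. - g z) = - ip f g" using ip_scale_right[OF assms, of "-1"] by simp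
  finally show ?thesis using Q_add[OF assms] by simp
qed

definition dist_h where "dist_h f g = (if f \<in> Hs \<and> g \<in> Hs then N (\<lambda>z. f z - g z) else 0)"

lemma metric: "Metric_space Hs dist_h"
proof
  show "0 \<le> dist_h x y" for x y unfolding dist_h_def using N_nonneg diff_in by auto
  show "dist_h x y = dist_h y x" for x y unfolding dist_h_def using N_sym by auto
  show "dist_h x y = 0 \<longleftrightarrow> x = y" if "x \<in> Hs" "y \<in> Hs" for x y
  proof
    assume "dist_h x y = 0"
    then have "(\<lambda>z. x z - y z) = (\<lambda>z. 0)" using that N_zero diff_in unfolding dist_h_def by auto
    then show "x = y" by (metis (no_types) eq_iff_diff_eq_0 ext)
  next
    assume "x = y" then show "dist_h x y = 0" unfolding dist_h_def N_Q Q_def using that ip_zero_left zero_in by simp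
  qed
  show "dist_h x z \<le> dist_h x y + dist_h y z" if "x \<in> Hs" "y \<in> Hs" "z \<in> Hs" for x y z
    unfolding dist_h_def using that N_triangle3 by auto
qed


lemma Q_diff_scale_bound:
  assumes "h \<in> Hs" "f \<in> Hs" and ge: "\<And>t. Q h \<le> Q (\<lambda>z. h z - t * f z)"
  shows "ip h f = 0"
proof (cases "Q f = 0")
  case True
  then have "f = (\<lambda>z. 0)" using Q_zero assms by auto
  then show ?thesis using ip_zero_right assms by simp
next
  case False
  then have qg: "Q f > 0" using Q_nonneg assms by fastforce
  define c where "c = ip h f"
  define q where "q = Q f"
  define t where "t = c / of_real q"
  have e0: "ip (\<lambda>z. h z - t * f z) (\<lambda>z. h z - t * f z) = ip h h - cnj t * ip h f - t * ip f h + t * cnj t * ip f f"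
    using expand[OF assms(1,2), of t] .
  have e: "ip (\<lambda>z. h z - t * f z) (\<lambda>z. h z - t * f z) = of_real (Q h) - cnj t * c - t * cnj c + t * cnj t * of_real q"
    unfolding e0 c_def q_def ip_self_real[OF assms(1)] ip_self_real[OF assms(2)] ip_cnj[OF assms(2) assms(1)] ..
  have sq: "c * cnj c = of_real ((cmod c)^2)" using complex_norm_square[of c] by simp
  have 1: "cnj t * c = of_real ((cmod c)^2 / q)" unfolding t_def using sq by (simp add: mult.commute)
  have 2: "t * cnj c = of_real ((cmod c)^2 / q)" unfolding t_def using sq by simp
  have 3: "t * cnj t * of_real q = of_real ((cmod c)^2 / q)" unfolding t_def using sq qg q_def
    by (simp add: power2_eq_square)
  have "Q h \<le> Re (ip (\<lambda>z. h z - t * f z) (\<lambda>z. h z - t * f z))"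
    using ge[of t] unfolding Q_def .
  also have "\<dots> = Q h - (cmod c)^2 / q"
    unfolding e 1 2 3 by simp
  finally have "(cmod c)^2 / q \<le> 0" by simp
  then have "(cmod c)^2 \<le> 0" using qg q_def by (simp add: divide_le_0_iff)
  then show ?thesis unfolding c_def by simp
qed

lemma riesz:
  assumes ladd: "\<And>f g. f \<in> Hs \<Longrightarrow> g \<in> Hs \<Longrightarrow> L (\<lambda>z. f z + g z) = L f + L g"
    and lscale: "\<And>f c. f \<in> Hs \<Longrightarrow> L (\<lambda>z. c * f z) = c * L f"
    and bdd: "\<And>f. f \<in> Hs \<Longrightarrow> cmod (L f) \<le> C * N f"
  shows "\<exists>k\<in>Hs. \<forall>f\<in>Hs. L f = ip f k"
proof (cases "\<forall>f\<in>Hs. L f = 0")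
  case True
  then show ?thesis using zero_in ip_zero_right by auto
next
  case False
  have l0: "L (\<lambda>z. 0) = 0" using lscale[OF zero_in, of 0] by simp
  have ldiff: "L (\<lambda>z. f z - g z) = L f - L g" if "f \<in> Hs" "g \<in> Hs" for f g
    using ladd[OF that(1) neg_in[OF that(2)]] lscale[OF that(2), of "-1"] by simp
  have bdd': "cmod (L f) \<le> \<bar>C\<bar> * N f" if "f \<in> Hs" for f
    using bdd[OF that] N_nonneg[OF that] by (meson abs_ge_self mult_right_mono order_trans)
  from False obtain g0 where g0: "g0 \<in> Hs" "L g0 \<noteq> 0" by auto
  define g where "g = (\<lambda>z. (1 / L g0) * g0 z)"
  have g1: "g \<in> Hs" unfolding g_def by (rule scale_in[OF g0(1)])
  have g2: "L g = 1" unfolding g_def lscale[OF g0(1)] using g0(2) by simp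
  note g = g1 g2
  define MS where "MS = {m \<in> Hs. L m = 0}"
  have MS_in: "m \<in> MS \<Longrightarrow> m \<in> Hs" "m \<in> MS \<Longrightarrow> L m = 0" for m unfolding MS_def by auto
  define D where "D = (\<lambda>m. Q (\<lambda>z. g z - m z)) ` MS"
  define \<delta> where "\<delta> = Inf D"
  have D0: "(\<lambda>z. 0) \<in> MS" unfolding MS_def using zero_in l0 by auto
  have Dne: "D \<noteq> {}" unfolding D_def using D0 by auto
  have Dbdd: "bdd_below D" unfolding D_def bdd_below_def using Q_nonneg diff_in g MS_in by blast
  have Dlow: "\<delta> \<le> Q (\<lambda>z. g z - m z)" if "m \<in> MS" for m
    unfolding \<delta>_def D_def using that Dbdd[unfolded D_def] by (intro cInf_lower) auto
  have "\<exists>m. m \<in> MS \<and> Q (\<lambda>z. g z - m z) < \<delta> + 1 / (real n + 1)" for n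
  proof -
    have "Inf D < \<delta> + 1 / (real n + 1)" unfolding \<delta>_def by (simp add: add_pos_pos)
    from cInf_lessD[OF Dne this] show ?thesis unfolding D_def by auto
  qed
  then obtain ms where ms: "\<And>n. ms n \<in> MS" "\<And>n. Q (\<lambda>z. g z - ms n z) < \<delta> + 1 / (real n + 1)"
    by metis
  have msH: "ms n \<in> Hs" for n using MS_in ms by auto
  have \<delta>0: "0 \<le> \<delta>" unfolding \<delta>_def
  proof (rule cInf_greatest[OF Dne])
    fix x assume "x \<in> D"
    then obtain m' where "m' \<in> MS" "x = Q (\<lambda>z. g z - m' z)" unfolding D_def by auto
    then show "0 \<le> x" using Q_nonneg diff_in g(1) MS_in by auto
  qed
  have cauchy: "Q (\<lambda>z. ms a z - ms b z) \<le> 2 / (real a + 1) + 2 / (real b + 1)" for a b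
  proof -
    define x where "x = (\<lambda>z. g z - ms a z)"
    define y where "y = (\<lambda>z. g z - ms b z)"
    define mid where "mid = (\<lambda>z. (1/2) * (ms a z + ms b z))"
    have xy: "x \<in> Hs" "y \<in> Hs" unfolding x_def y_def using g msH diff_in by auto
    have midH: "mid \<in> Hs" unfolding mid_def by (intro scale_in add_in msH)
    have "L mid = 0" unfolding mid_def lscale[OF add_in[OF msH msH]] ladd[OF msH msH] using MS_in ms by simp
    then have midM: "mid \<in> MS" unfolding MS_def using midH by auto
    have "(\<lambda>z. x z + y z) = (\<lambda>z. 2 * (g z - mid z))" unfolding x_def y_def mid_def
      by (simp add: algebra_simps)
    then have "Q (\<lambda>z. x z + y z) = 4 * Q (\<lambda>z. g z - mid z)" using Q_scale[OF diff_in[OF g(1) midH], of 2] by simp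
    then have A: "Q (\<lambda>z. x z + y z) \<ge> 4 * \<delta>" using Dlow[OF midM] by simp
    have "(\<lambda>z. x z - y z) = (\<lambda>z. ms b z - ms a z)" unfolding x_def y_def by simp
    then have "Q (\<lambda>z. x z - y z) = Q (\<lambda>z. ms a z - ms b z)"
      using N_sym[OF msH msH, of a b] N_Q by (metis N_sq diff_in msH)
    moreover have "Q x < \<delta> + 1 / (real a + 1)" "Q y < \<delta> + 1 / (real b + 1)" unfolding x_def y_def using ms by auto
    ultimately show ?thesis using parallelogram[OF xy] A by linarith
  qed
  have "\<exists>K. \<forall>a\<ge>K. \<forall>b\<ge>K. hnorm ip (\<lambda>z. ms a z - ms b z) < e" if "e > 0" for e
  proof -
    obtain K :: nat where K: "4 / (e^2) < real K" using reals_Archimedean2 by blast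
    have "hnorm ip (\<lambda>z. ms a z - ms b z) < e" if "a \<ge> K" "b \<ge> K" for a b
    proof -
      have e2: "e^2 > 0" using \<open>e>0\<close> by simp
      have "2 / (real a + 1) \<le> 2 / (real K + 1)" "2 / (real b + 1) \<le> 2 / (real K + 1)"
        using that by (auto intro!: divide_left_mono)
      moreover have "4 / (real K + 1) < e^2"
      proof -
        have "4 < e^2 * real K" using K e2 by (simp add: divide_less_eq mult.commute)
        also have "\<dots> \<le> e^2 * (real K + 1)" using e2 by simp
        finally show ?thesis by (simp add: pos_divide_less_eq)
      qed
      ultimately have "Q (\<lambda>z. ms a z - ms b z) < e^2" using cauchy[of a b] by linarith
      then have "sqrt (Q (\<lambda>z. ms a z - ms b z)) < sqrt (e^2)" by (rule real_sqrt_less_mono)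
      then show ?thesis using \<open>e>0\<close> unfolding N_Q[symmetric] N_def by simp
    qed
    then show ?thesis by blast
  qed
  then obtain m where m: "m \<in> Hs" "\<And>e. e > 0 \<Longrightarrow> \<exists>K. \<forall>n\<ge>K. hnorm ip (\<lambda>z. ms n z - m z) < e"
    using complete[of ms] msH by blast
  have mN: "\<exists>K. \<forall>n\<ge>K. N (\<lambda>z. ms n z - m z) < e" if "e > 0" for e using m(2)[OF that] unfolding N_def .
  have Lm: "L m = 0"
  proof -
    have "cmod (L m) \<le> 0 + e" if e0: "e > 0" for e
    proof -
      have e1: "e / (\<bar>C\<bar> + 1) > 0" using e0 by simp
      obtain K where K: "\<forall>n\<ge>K. N (\<lambda>z. ms n z - m z) < e / (\<bar>C\<bar> + 1)" using mN[OF e1] by blast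
      have "cmod (L m) = cmod (L (\<lambda>z. ms K z - m z))" using ldiff[OF msH m(1), of K] MS_in ms by simp
      also have "\<dots> \<le> \<bar>C\<bar> * N (\<lambda>z. ms K z - m z)" using bdd' diff_in msH m(1) by blast
      also have "\<dots> \<le> \<bar>C\<bar> * (e / (\<bar>C\<bar> + 1))" using K by (intro mult_left_mono) auto
      also have "\<dots> \<le> e" using e0 by (simp add: field_simps)
      finally show ?thesis by simp
    qed
    then have "cmod (L m) \<le> 0" by (rule field_le_epsilon)
    then show ?thesis by simp
  qed
  define h where "h = (\<lambda>z. g z - m z)"
  have hH: "h \<in> Hs" unfolding h_def using diff_in g(1) m(1) .
  have Lh: "L h = 1" unfolding h_def ldiff[OF g(1) m(1)] g(2) Lm by simp
  have Qh: "Q h \<le> \<delta>"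
  proof (rule ccontr)
    assume "\<not> Q h \<le> \<delta>"
    then have "sqrt \<delta> < N h" unfolding N_Q by simp
    then obtain \<eta> where eta: "\<eta> > 0" "N h = sqrt \<delta> + \<eta>" by (metis add.commute diff_add_cancel diff_gt_0_iff_gt)
    have eta2: "\<eta>/2 > 0" using eta by simp
    obtain K1 where K1: "\<forall>n\<ge>K1. N (\<lambda>z. ms n z - m z) < \<eta>/2" using mN[OF eta2] by blast
    obtain K2 :: nat where K2: "4 / \<eta>^2 < real K2" using reals_Archimedean2 by blast
    define n where "n = max K1 K2"
    have n1: "N (\<lambda>z. ms n z - m z) < \<eta>/2" using K1 unfolding n_def by simp
    have "1 / (real n + 1) < (\<eta>/2)^2"
    proof -
      have "4 < \<eta>^2 * real K2" using K2 eta by (simp add: divide_less_eq mult.commute)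
      also have "\<dots> \<le> \<eta>^2 * (real n + 1)" unfolding n_def by (intro mult_left_mono) auto
      finally have "4 < \<eta>^2 * (real n + 1)" .
      then show ?thesis by (simp add: pos_divide_less_eq power_divide)
    qed
    then have "sqrt (1 / (real n + 1)) < sqrt ((\<eta>/2)^2)" by (rule real_sqrt_less_mono)
    then have s1: "sqrt (1 / (real n + 1)) < \<eta>/2" using eta by simp
    have "N (\<lambda>z. g z - ms n z) = sqrt (Q (\<lambda>z. g z - ms n z))" by (rule N_Q)
    also have "\<dots> \<le> sqrt (\<delta> + 1 / (real n + 1))" using ms(2)[of n] by simp
    also have "\<dots> \<le> sqrt \<delta> + sqrt (1 / (real n + 1))" by (rule sqrt_add_le_add_sqrt) (use \<delta>0 in auto)
    finally have n2: "N (\<lambda>z. g z - ms n z) < sqrt \<delta> + \<eta>/2" using s1 by simp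
    have "N h \<le> N (\<lambda>z. g z - ms n z) + N (\<lambda>z. ms n z - m z)" unfolding h_def
      by (rule N_triangle3[OF g(1) msH m(1)])
    then have "N h < sqrt \<delta> + \<eta>" using n1 n2 by simp
    then show False using eta by simp
  qed
  have orth: "ip h f = 0" if fM: "f \<in> MS" for f
  proof (rule Q_diff_scale_bound[OF hH MS_in(1)[OF fM]])
    fix t
    have mt: "(\<lambda>z. m z + t * f z) \<in> MS" unfolding MS_def
      using add_in[OF m(1) scale_in[OF MS_in(1)[OF fM]]] ladd[OF m(1) scale_in[OF MS_in(1)[OF fM]]]
        lscale[OF MS_in(1)[OF fM]] Lm MS_in(2)[OF fM] by simp
    have "(\<lambda>z. h z - t * f z) = (\<lambda>z. g z - (m z + t * f z))" unfolding h_def by (simp add: algebra_simps)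
    then have "Q (\<lambda>z. h z - t * f z) \<ge> \<delta>" using Dlow[OF mt] by simp
    then show "Q h \<le> Q (\<lambda>z. h z - t * f z)" using Qh by simp
  qed
  have hne: "Q h > 0"
  proof -
    have "Q h \<noteq> 0"
    proof
      assume "Q h = 0"
      then have "h = (\<lambda>z. 0)" using Q_zero hH by auto
      then show False using Lh l0 by simp
    qed
    then show ?thesis using Q_nonneg[OF hH] by simp
  qed
  define k where "k = (\<lambda>z. of_real (1 / Q h) * h z)"
  have kH: "k \<in> Hs" unfolding k_def by (rule scale_in[OF hH])
  have "L f = ip f k" if fH: "f \<in> Hs" for f
  proof -
    define f' where "f' = (\<lambda>z. f z - L f * h z)"
    have f'H: "f' \<in> Hs" unfolding f'_def using diff_in[OF fH scale_in[OF hH]] .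
    have "L f' = 0" unfolding f'_def ldiff[OF fH scale_in[OF hH]] lscale[OF hH] Lh by simp
    then have "f' \<in> MS" unfolding MS_def using f'H by simp
    then have "ip h f' = 0" by (rule orth)
    then have "ip f' h = 0" using ip_cnj[OF f'H hH] by simp
    then have "ip f h - L f * ip h h = 0" unfolding f'_def ip_diff[OF fH scale_in[OF hH] hH] ip_scale[OF hH hH] .
    then have "ip f h = L f * of_real (Q h)" using ip_self_real[OF hH] by simp
    then have "ip f k = of_real (1 / Q h) * (L f * of_real (Q h))"
      unfolding k_def ip_scale_right[OF fH hH] by simp
    then show ?thesis using hne by simp
  qed
  then show ?thesis using kH by blast
qed


lemma poly_ortho_zero:
  assumes hH: "h \<in> Hs" and orth: "\<And>p. ip (polyfun Om p) h = 0"
  shows "h = (\<lambda>z. 0)"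
proof -
  have "N h \<le> 0 + e" if e0: "e > 0" for e
  proof (cases "N h = 0")
    case True then show ?thesis using e0 by simp
  next
    case False
    then have Np: "N h > 0" using N_nonneg[OF hH] by simp
    obtain p where p: "hnorm ip (\<lambda>z. h z - polyfun Om p z) < e" using dense[OF hH e0] by blast
    have "ip h h = ip h h - ip (polyfun Om p) h" using orth[of p] by simp
    then have "cmod (ip h h) \<le> N (\<lambda>z. h z - polyfun Om p z) * N h"
      using ip_cont[OF hH poly_in[of p] hH] orth[of p] by simp
    also have "\<dots> \<le> e * N h" using p Np unfolding N_def by (intro mult_right_mono) auto
    finally have "(N h)^2 \<le> e * N h" using ip_self_real[OF hH] N_sq[OF hH] Q_nonneg[OF hH] by simp
    then have "N h * N h \<le> e * N h" by (simp add: power2_eq_square)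
    then have "N h \<le> e" using Np by simp
    then show ?thesis by simp
  qed
  then have "N h \<le> 0" by (rule field_le_epsilon)
  then have "N h = 0" using N_nonneg[OF hH] by simp
  then show ?thesis using N_zero[OF hH] by simp
qed

lemma kern_unique:
  assumes "k1 \<in> Hs" "k2 \<in> Hs" "\<And>p. ip (polyfun Om p) k1 = ip (polyfun Om p) k2"
  shows "k1 = k2"
proof -
  have "(\<lambda>z. k1 z - k2 z) = (\<lambda>z. 0)"
    using poly_ortho_zero[OF diff_in[OF assms(1,2)]] ip_diff_right[OF assms(1,2) poly_in] assms(3) by simp
  then show ?thesis by (metis (no_types) eq_iff_diff_eq_0 ext)
qed

lemma kern_eq:
  assumes "k \<in> Hs" "\<And>p. poly ((pderiv ^^ m) p) \<beta> = ip (polyfun Om p) k"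
  shows "kern Om Hs ip \<beta> m = k"
  unfolding kern_def
proof (rule the_equality)
  show "k \<in> Hs \<and> (\<forall>p. poly ((pderiv ^^ m) p) \<beta> = ip (polyfun Om p) k)" using assms by auto
  fix k' assume a: "k' \<in> Hs \<and> (\<forall>p. poly ((pderiv ^^ m) p) \<beta> = ip (polyfun Om p) k')"
  show "k' = k"
  proof (rule kern_unique)
    show "k' \<in> Hs" using a by simp
    show "k \<in> Hs" using assms(1) .
    show "ip (polyfun Om p) k' = ip (polyfun Om p) k" for p using a assms(2)[of p] by simp
  qed
qed

lemma kern_from_functional:
  assumes ladd: "\<And>f g. f \<in> Hs \<Longrightarrow> g \<in> Hs \<Longrightarrow> L (\<lambda>z. f z + g z) = L f + L g"
    and lscale: "\<And>f c. f \<in> Hs \<Longrightarrow> L (\<lambda>z. c * f z) = c * L f"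
    and bdd: "\<And>f. f \<in> Hs \<Longrightarrow> cmod (L f) \<le> C * N f"
    and lp: "\<And>p. L (polyfun Om p) = poly ((pderiv ^^ m) p) \<beta>"
  shows "kern Om Hs ip \<beta> m \<in> Hs \<and> (\<forall>f\<in>Hs. L f = ip f (kern Om Hs ip \<beta> m))"
proof -
  obtain k where k: "k \<in> Hs" "\<forall>f\<in>Hs. L f = ip f k" using riesz[OF ladd lscale bdd] by blast
  have "kern Om Hs ip \<beta> m = k" using k poly_in lp by (intro kern_eq) auto
  then show ?thesis using k by simp
qed

lemma kern_reproducible:
  assumes "reproducible Om Hs ip \<beta> m"
  shows "kern Om Hs ip \<beta> m \<in> Hs \<and> (\<forall>p. poly ((pderiv ^^ m) p) \<beta> = ip (polyfun Om p) (kern Om Hs ip \<beta> m))"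
proof -
  obtain L C where L: "\<forall>f\<in>Hs. \<forall>g\<in>Hs. L (\<lambda>z. f z + g z) = L f + L g"
    "\<forall>f\<in>Hs. \<forall>c. L (\<lambda>z. c * f z) = c * L f" "\<forall>f\<in>Hs. cmod (L f) \<le> C * hnorm ip f"
    "\<forall>p. L (polyfun Om p) = poly ((pderiv ^^ m) p) \<beta>"
    using assms unfolding reproducible_def by blast
  have "kern Om Hs ip \<beta> m \<in> Hs \<and> (\<forall>f\<in>Hs. L f = ip f (kern Om Hs ip \<beta> m))"
    by (rule kern_from_functional[where L=L and C=C]) (use L in \<open>auto simp: N_def\<close>)
  then show ?thesis using L(4) poly_in by metis
qed


lemma pointeval_abs: assumes "w \<in> Om" obtains C where "C \<ge> 0" "\<And>f. f \<in> Hs \<Longrightarrow> cmod (f w) \<le> C * N f"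
proof -
  obtain C where C: "\<forall>f\<in>Hs. cmod (f w) \<le> C * hnorm ip f" using pointeval[OF assms] by blast
  have "cmod (f w) \<le> \<bar>C\<bar> * N f" if "f \<in> Hs" for f
  proof -
    have "cmod (f w) \<le> C * N f" using C that unfolding N_def by blast
    also have "\<dots> \<le> \<bar>C\<bar> * N f" using N_nonneg[OF that] by (intro mult_right_mono) auto
    finally show ?thesis .
  qed
  then show ?thesis using that[of "\<bar>C\<bar>"] by simp
qed

lemma mcomplete: "Metric_space.mcomplete Hs dist_h"
proof -
  interpret M: Metric_space Hs dist_h by (rule metric)
  show ?thesis unfolding M.mcomplete_def
  proof (intro allI impI)
    fix \<sigma> assume c: "M.MCauchy \<sigma>"
    have \<sigma>H: "\<sigma> n \<in> Hs" for n using c unfolding M.MCauchy_def by auto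
    have "\<exists>K. \<forall>m\<ge>K. \<forall>n\<ge>K. hnorm ip (\<lambda>z. \<sigma> m z - \<sigma> n z) < e" if e0: "e > 0" for e
    proof -
      have "\<forall>\<epsilon>>0. \<exists>N. \<forall>n n'. N \<le> n \<longrightarrow> N \<le> n' \<longrightarrow> dist_h (\<sigma> n) (\<sigma> n') < \<epsilon>"
        using c unfolding M.MCauchy_def by (rule conjunct2)
      then obtain K where K: "\<forall>n n'. K \<le> n \<longrightarrow> K \<le> n' \<longrightarrow> dist_h (\<sigma> n) (\<sigma> n') < e"
        using e0 by blast
      show ?thesis
        using K \<sigma>H unfolding dist_h_def N_def by (intro exI[of _ K]) auto
    qed
    then obtain f where f: "f \<in> Hs" "\<forall>e>0. \<exists>K. \<forall>n\<ge>K. hnorm ip (\<lambda>z. \<sigma> n z - f z) < e"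
      using complete[of \<sigma>] \<sigma>H by blast
    have "limitin M.mtopology \<sigma> f sequentially"
      unfolding M.limit_metric_sequentially
    proof (intro conjI allI impI)
      show "f \<in> Hs" using f(1) .
      fix e :: real assume "e > 0"
      then obtain K where "\<forall>n\<ge>K. hnorm ip (\<lambda>z. \<sigma> n z - f z) < e" using f(2) by blast
      then show "\<exists>K. \<forall>n\<ge>K. \<sigma> n \<in> Hs \<and> dist_h (\<sigma> n) f < e"
        using \<sigma>H f(1) unfolding dist_h_def N_def by auto
    qed
    then show "\<exists>x. limitin M.mtopology \<sigma> x sequentially" by blast
  qed
qed

lemma uniform_pointeval:
  assumes r: "r > 0" "cball 0 r \<subseteq> Om"
  obtains B where "B \<ge> 0" "\<And>g w. g \<in> Hs \<Longrightarrow> w \<in> cball 0 r \<Longrightarrow> cmod (g w) \<le> B * N g"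
proof -
  interpret M: Metric_space Hs dist_h by (rule metric)
  define F where "F = (\<lambda>n::nat. {f \<in> Hs. \<forall>w\<in>cball 0 r. cmod (f w) \<le> real n})"
  have closed: "closedin M.mtopology (F n)" for n
    unfolding M.metric_closedin_iff_sequentially_closed
  proof (intro conjI allI impI)
    show "F n \<subseteq> Hs" unfolding F_def by auto
    fix \<sigma> l assume a: "range \<sigma> \<subseteq> F n \<and> limitin M.mtopology \<sigma> l sequentially"
    have \<sigma>F: "\<sigma> k \<in> F n" for k using a by auto
    have \<sigma>H: "\<sigma> k \<in> Hs" for k using \<sigma>F unfolding F_def by auto
    have lH: "l \<in> Hs" and lim: "\<forall>e>0. \<exists>K. \<forall>k\<ge>K. \<sigma> k \<in> Hs \<and> dist_h (\<sigma> k) l < e"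
      using a unfolding M.limit_metric_sequentially by auto
    have "cmod (l w) \<le> real n" if w: "w \<in> cball 0 r" for w
    proof -
      obtain C where C: "C \<ge> 0" "\<And>f. f \<in> Hs \<Longrightarrow> cmod (f w) \<le> C * N f"
        using pointeval_abs[of w] w r by blast
      have "cmod (l w) \<le> real n + e" if e0: "e > 0" for e
      proof -
        have e1: "e / (C + 1) > 0" using e0 C(1) by simp
        obtain K where K: "dist_h (\<sigma> K) l < e / (C + 1)" using lim e1 by blast
        have d: "N (\<lambda>z. \<sigma> K z - l z) < e / (C + 1)" using K \<sigma>H lH unfolding dist_h_def by simp
        have "cmod (\<sigma> K w - l w) \<le> C * N (\<lambda>z. \<sigma> K z - l z)"
          using C(2)[OF diff_in[OF \<sigma>H lH]] by simp
        also have "\<dots> \<le> C * (e / (C + 1))" using d C(1) by (intro mult_left_mono) auto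
        also have "\<dots> \<le> e" using e0 C(1) by (simp add: field_simps)
        finally have 1: "cmod (\<sigma> K w - l w) \<le> e" .
        have 2: "cmod (\<sigma> K w) \<le> real n" using \<sigma>F[of K] w unfolding F_def by auto
        have "cmod (l w) \<le> cmod (\<sigma> K w) + cmod (\<sigma> K w - l w)" by (metis norm_triangle_sub add.commute norm_minus_commute)
        then show ?thesis using 1 2 by simp
      qed
      then show ?thesis by (rule field_le_epsilon)
    qed
    then show "l \<in> F n" unfolding F_def using lH by auto
  qed
  have cover: "\<Union> (range F) = Hs"
  proof
    show "\<Union> (range F) \<subseteq> Hs" unfolding F_def by auto
    show "Hs \<subseteq> \<Union> (range F)"
    proof
      fix f assume fH: "f \<in> Hs"
      have "continuous_on (cball 0 r) f"
        using holomorphic_on_imp_continuous_on[OF hol[OF fH]] r(2) continuous_on_subset by blast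
      then have "compact (f ` cball 0 r)" by (intro compact_continuous_image) auto
      then obtain B where B: "\<forall>x\<in>f ` cball 0 r. norm x \<le> B" using compact_imp_bounded bounded_iff by metis
      obtain n :: nat where "B \<le> real n" using real_nat_ceiling_ge by blast
      then have "cmod (f w) \<le> real n" if "w \<in> cball 0 r" for w using B that by (meson image_eqI order_trans)
      then have "f \<in> F n" unfolding F_def using fH by blast
      then show "f \<in> \<Union> (range F)" by blast
    qed
  qed
  have "\<exists>n. M.mtopology interior_of (F n) \<noteq> {}"
  proof (rule ccontr)
    assume "\<not> ?thesis"
    then have "M.mtopology interior_of \<Union> (range F) = {}"
      using closed by (intro M.metric_Baire_category_alt mcomplete) auto
    moreover have "M.mtopology interior_of \<Union> (range F) = Hs"
      unfolding cover by (metis M.topspace_mtopology interior_of_topspace)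
    ultimately show False using zero_in by simp
  qed
  then obtain n f0 where f0: "f0 \<in> M.mtopology interior_of (F n)" by blast
  have "openin M.mtopology (M.mtopology interior_of (F n))" by simp
  then obtain \<epsilon> where \<epsilon>: "\<epsilon> > 0" "M.mball f0 \<epsilon> \<subseteq> M.mtopology interior_of (F n)"
    using f0 unfolding M.openin_mtopology by blast
  have ballF: "M.mball f0 \<epsilon> \<subseteq> F n" using order_trans[OF \<epsilon>(2) interior_of_subset] .
  have f0F: "f0 \<in> F n" using interior_of_subset[of M.mtopology "F n"] f0 by (rule subsetD)
  have f0H: "f0 \<in> Hs" using f0F unfolding F_def by auto
  define B where "B = 4 * real n / \<epsilon>"
  have B0: "B \<ge> 0" unfolding B_def using \<epsilon> by simp
  have "cmod (g w) \<le> B * N g" if gH: "g \<in> Hs" and w: "w \<in> cball 0 r" for g w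
  proof (cases "N g = 0")
    case True
    then have "g = (\<lambda>z. 0)" using N_zero gH by simp
    then show ?thesis using True by simp
  next
    case False
    then have Ng: "N g > 0" using N_nonneg[OF gH] by simp
    define t where "t = \<epsilon> / (2 * N g)"
    have t0: "t > 0" unfolding t_def using Ng \<epsilon> by simp
    define f1 where "f1 = (\<lambda>z. f0 z + of_real t * g z)"
    have f1H: "f1 \<in> Hs" unfolding f1_def by (intro add_in f0H scale_in gH)
    have "(\<lambda>z. f0 z - f1 z) = (\<lambda>z. (- of_real t) * g z)" unfolding f1_def by simp
    then have "N (\<lambda>z. f0 z - f1 z) = t * N g" using N_scale[OF gH, of "- of_real t"] t0 by simp
    also have "\<dots> = \<epsilon> / 2" unfolding t_def using Ng by simp
    finally have "dist_h f0 f1 < \<epsilon>" unfolding dist_h_def using f0H f1H \<epsilon> by simp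
    then have "f1 \<in> M.mball f0 \<epsilon>" using f0H f1H by simp
    then have "f1 \<in> F n" using ballF by blast
    then have 1: "cmod (f0 w + of_real t * g w) \<le> real n" using w unfolding F_def f1_def by auto
    have 2: "cmod (f0 w) \<le> real n" using f0F w unfolding F_def by auto
    have "cmod (of_real t * g w) \<le> cmod (f0 w + of_real t * g w) + cmod (f0 w)"
      by (metis add_diff_cancel_left' norm_triangle_ineq4 add.commute)
    then have "t * cmod (g w) \<le> 2 * real n" using 1 2 t0 by (simp add: norm_mult)
    then have "cmod (g w) \<le> 2 * real n / t" using t0 by (simp add: field_simps)
    also have "\<dots> = B * N g" unfolding t_def B_def using Ng \<epsilon> by (simp add: field_simps)
    finally show ?thesis .
  qed
  then show ?thesis using that B0 by blast
qed


lemma deriv0_bdd: "\<exists>C. \<forall>f\<in>Hs. cmod ((deriv ^^ l) f 0) \<le> C * N f"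
proof -
  obtain r where r: "r > 0" "cball 0 r \<subseteq> Om" using open_Om zero_Om open_contains_cball by blast
  obtain B where B: "B \<ge> 0" "\<And>g w. g \<in> Hs \<Longrightarrow> w \<in> cball 0 r \<Longrightarrow> cmod (g w) \<le> B * N g"
    using uniform_pointeval[OF r] by blast
  have "cmod ((deriv ^^ l) f 0) \<le> (fact l * B / r^l) * N f" if fH: "f \<in> Hs" for f
  proof -
    have "cmod ((deriv ^^ l) f 0) \<le> fact l * (B * N f) / r ^ l"
    proof (rule Cauchy_inequality)
      show "f holomorphic_on ball 0 r" using hol[OF fH] r(2) ball_subset_cball holomorphic_on_subset by blast
      show "continuous_on (cball 0 r) f"
        using holomorphic_on_imp_continuous_on[OF hol[OF fH]] r(2) continuous_on_subset by blast
      show "0 < r" using r(1) .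
      fix x :: complex assume "cmod (0 - x) = r"
      then have "x \<in> cball 0 r" by (simp add: dist_norm)
      then show "cmod (f x) \<le> B * N f" using B(2)[OF fH] by blast
    qed
    then show ?thesis by simp
  qed
  then show ?thesis by blast
qed

lemma polyfun_higher_deriv0: "(deriv ^^ l) (polyfun Om p) 0 = poly ((pderiv ^^ l) p) 0"
proof -
  have "(deriv ^^ l) (polyfun Om p) 0 = (deriv ^^ l) (poly p) 0"
  proof (rule higher_deriv_transform_within_open[OF hol[OF poly_in] _ open_Om zero_Om])
    show "poly p holomorphic_on Om" using poly_holomorphic_on[of "\<lambda>z. z" Om p] by simp
    show "polyfun Om p w = poly p w" if "w \<in> Om" for w using that unfolding polyfun_def by simp
  qed
  then show ?thesis unfolding poly_higher_deriv .
qed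

lemma kern0: "kern Om Hs ip 0 l \<in> Hs \<and> (\<forall>f\<in>Hs. (deriv ^^ l) f 0 = ip f (kern Om Hs ip 0 l))"
proof -
  obtain C where C: "\<forall>f\<in>Hs. cmod ((deriv ^^ l) f 0) \<le> C * N f" using deriv0_bdd by blast
  show ?thesis
  proof (rule kern_from_functional[where L="\<lambda>f. (deriv ^^ l) f 0" and C=C])
    show "(deriv ^^ l) (\<lambda>z. f z + g z) 0 = (deriv ^^ l) f 0 + (deriv ^^ l) g 0" if "f \<in> Hs" "g \<in> Hs" for f g
      by (rule higher_deriv_add[OF hol[OF that(1)] hol[OF that(2)] open_Om zero_Om])
    show "(deriv ^^ l) (\<lambda>z. c * f z) 0 = c * (deriv ^^ l) f 0" if "f \<in> Hs" for f c
      by (rule higher_deriv_cmult[OF hol[OF that] zero_Om open_Om])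
    show "cmod ((deriv ^^ l) f 0) \<le> C * N f" if "f \<in> Hs" for f using C that by blast
    show "(deriv ^^ l) (polyfun Om p) 0 = poly ((pderiv ^^ l) p) 0" for p by (rule polyfun_higher_deriv0)
  qed
qed


lemma reproducible_Suc:
  assumes "reproducible Om Hs ip \<beta> (Suc m)"
  shows "reproducible Om Hs ip \<beta> m"
proof -
  obtain L C where L: "\<forall>f\<in>Hs. \<forall>g\<in>Hs. L (\<lambda>z. f z + g z) = L f + L g"
    "\<forall>f\<in>Hs. \<forall>c. L (\<lambda>z. c * f z) = c * L f" "\<forall>f\<in>Hs. cmod (L f) \<le> C * hnorm ip f"
    "\<forall>p. L (polyfun Om p) = poly ((pderiv ^^ Suc m) p) \<beta>"
    using assms unfolding reproducible_def by blast
  obtain CS where CS: "\<forall>f\<in>Hs. hnorm ip (\<lambda>z. z * f z) \<le> CS * hnorm ip f" using shift_bdd by blast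
  have Lb: "cmod (L f) \<le> \<bar>C\<bar> * N f" if "f \<in> Hs" for f
  proof -
    have "cmod (L f) \<le> C * N f" using L(3) that unfolding N_def by blast
    also have "\<dots> \<le> \<bar>C\<bar> * N f" using N_nonneg[OF that] by (intro mult_right_mono) auto
    finally show ?thesis .
  qed
  have Sb: "N (\<lambda>z. z * f z) \<le> \<bar>CS\<bar> * N f" if "f \<in> Hs" for f
  proof -
    have "N (\<lambda>z. z * f z) \<le> CS * N f" using CS that unfolding N_def by blast
    also have "\<dots> \<le> \<bar>CS\<bar> * N f" using N_nonneg[OF that] by (intro mult_right_mono) auto
    finally show ?thesis .
  qed
  define c0 :: complex where "c0 = inverse (of_nat (Suc m))"
  have c0m: "c0 * of_nat (Suc m) = 1" unfolding c0_def by (simp only: of_nat_eq_0_iff nat.distinct(1) left_inverse not_False_eq_True)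
  define L' where "L' = (\<lambda>f. c0 * (L (\<lambda>z. z * f z) - \<beta> * L f))"
  have add': "L' (\<lambda>z. f z + g z) = L' f + L' g" if "f \<in> Hs" "g \<in> Hs" for f g
  proof -
    have "(\<lambda>z. z * (f z + g z)) = (\<lambda>z. z * f z + z * g z)" by (simp add: algebra_simps)
    then have "L (\<lambda>z. z * (f z + g z)) = L (\<lambda>z. z * f z) + L (\<lambda>z. z * g z)"
      using L(1) shift_in that by simp
    moreover have "L (\<lambda>z. f z + g z) = L f + L g" using L(1) that by blast
    ultimately show ?thesis unfolding L'_def by (simp add: algebra_simps)
  qed
  have scale': "L' (\<lambda>z. c * f z) = c * L' f" if "f \<in> Hs" for f c
  proof -
    have "(\<lambda>z. z * (c * f z)) = (\<lambda>z. c * (z * f z))" by (simp add: algebra_simps)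
    then have "L (\<lambda>z. z * (c * f z)) = c * L (\<lambda>z. z * f z)"
      using L(2) shift_in that by simp
    moreover have "L (\<lambda>z. c * f z) = c * L f" using L(2) that by blast
    ultimately show ?thesis unfolding L'_def by (simp add: algebra_simps)
  qed
  have bdd': "cmod (L' f) \<le> (cmod c0 * (\<bar>C\<bar> * \<bar>CS\<bar> + cmod \<beta> * \<bar>C\<bar>)) * N f" if fH: "f \<in> Hs" for f
  proof -
    have "cmod (L (\<lambda>z. z * f z) - \<beta> * L f) \<le> cmod (L (\<lambda>z. z * f z)) + cmod \<beta> * cmod (L f)"
      by (metis norm_mult norm_triangle_ineq4)
    also have "\<dots> \<le> \<bar>C\<bar> * (\<bar>CS\<bar> * N f) + cmod \<beta> * (\<bar>C\<bar> * N f)"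
    proof (rule add_mono)
      have "cmod (L (\<lambda>z. z * f z)) \<le> \<bar>C\<bar> * N (\<lambda>z. z * f z)" using Lb shift_in fH by blast
      also have "\<dots> \<le> \<bar>C\<bar> * (\<bar>CS\<bar> * N f)" using Sb[OF fH] by (intro mult_left_mono) auto
      finally show "cmod (L (\<lambda>z. z * f z)) \<le> \<bar>C\<bar> * (\<bar>CS\<bar> * N f)" .
      show "cmod \<beta> * cmod (L f) \<le> cmod \<beta> * (\<bar>C\<bar> * N f)" using Lb[OF fH] by (intro mult_left_mono) auto
    qed
    finally have A: "cmod (L (\<lambda>z. z * f z) - \<beta> * L f) \<le> (\<bar>C\<bar> * \<bar>CS\<bar> + cmod \<beta> * \<bar>C\<bar>) * N f"
      by (simp add: algebra_simps)
    have "cmod (L' f) = cmod c0 * cmod (L (\<lambda>z. z * f z) - \<beta> * L f)" unfolding L'_def by (simp add: norm_mult)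
    also have "\<dots> \<le> cmod c0 * ((\<bar>C\<bar> * \<bar>CS\<bar> + cmod \<beta> * \<bar>C\<bar>) * N f)" using A by (intro mult_left_mono) auto
    finally show ?thesis by (simp add: mult.assoc)
  qed
  have poly': "L' (polyfun Om p) = poly ((pderiv ^^ m) p) \<beta>" for p
  proof -
    have "(\<lambda>z. z * polyfun Om p z) = polyfun Om ([:0, 1:] * p)" unfolding polyfun_def by auto
    then have "L (\<lambda>z. z * polyfun Om p z) = poly ((pderiv ^^ Suc m) ([:0, 1:] * p)) \<beta>" using L(4) by simp
    also have "\<dots> = \<beta> * poly ((pderiv ^^ Suc m) p) \<beta> + of_nat (Suc m) * poly ((pderiv ^^ m) p) \<beta>"
      unfolding higher_pderiv_x_mult by (simp del: of_nat_Suc funpow.simps)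
    finally have "L (\<lambda>z. z * polyfun Om p z) - \<beta> * L (polyfun Om p) = of_nat (Suc m) * poly ((pderiv ^^ m) p) \<beta>"
      using L(4) by (simp del: of_nat_Suc funpow.simps)
    then have "L' (polyfun Om p) = (c0 * of_nat (Suc m)) * poly ((pderiv ^^ m) p) \<beta>"
      unfolding L'_def by (simp only: mult.assoc)
    then show ?thesis unfolding c0m by simp
  qed
  show ?thesis unfolding reproducible_def
    using add' scale' bdd' poly' unfolding N_def by blast
qed

lemma reproducible_le:
  assumes "reproducible Om Hs ip \<beta> m" "j \<le> m"
  shows "reproducible Om Hs ip \<beta> j"
  using assms(2,1)
proof (induction m rule: dec_induct)
  case base then show ?case .
next
  case (step n) then show ?case using reproducible_Suc by blast
qed

lemma multiset_reproducible:
  assumes "reproducible_multiset Om Hs ip Z" "\<beta> \<in># Z" "\<beta> \<noteq> 0" "j < count Z \<beta>"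
  shows "reproducible Om Hs ip \<beta> j"
proof (rule ccontr)
  assume nj: "\<not> reproducible Om Hs ip \<beta> j"
  have ex: "\<exists>m. reproducible Om Hs ip \<beta> m" and le: "enat (count Z \<beta>) \<le> ro Om Hs ip \<beta> + 1"
    using assms(1-3) unfolding reproducible_multiset_def by auto
  have lt: "m < j" if "reproducible Om Hs ip \<beta> m" for m
    using nj reproducible_le[OF that] by (meson not_le_imp_less)
  obtain m0 where "reproducible Om Hs ip \<beta> m0" using ex by blast
  then have j1: "j \<ge> 1" using lt by fastforce
  have "ro Om Hs ip \<beta> \<le> enat (j - 1)" unfolding ro_def
  proof (rule Sup_least)
    fix x assume "x \<in> {enat m |m. reproducible Om Hs ip \<beta> m}"
    then obtain m where "x = enat m" "reproducible Om Hs ip \<beta> m" by blast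
    then show "x \<le> enat (j - 1)" using lt by fastforce
  qed
  then have "ro Om Hs ip \<beta> + 1 \<le> enat (j - 1) + 1" by (rule add_right_mono)
  also have "\<dots> = enat j" using j1 by (simp add: one_enat_def)
  finally have rj: "ro Om Hs ip \<beta> + 1 \<le> enat j" .
  have "enat (count Z \<beta>) \<le> enat j" using le rj by (rule order_trans)
  then show False using assms(4) by simp
qed


lemma gram_det_nonzero:
  fixes ps :: "(complex \<times> nat) list"
  assumes dist: "distinct ps"
    and K: "\<And>b a. (b, a) \<in> set ps \<Longrightarrow> kern Om Hs ip b a \<in> Hs \<and>
              (\<forall>p. poly ((pderiv ^^ a) p) b = ip (polyfun Om p) (kern Om Hs ip b a))"
  defines "w \<equiv> \<lambda>j. kern Om Hs ip (fst (ps ! j)) (snd (ps ! j))"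
  shows "det (mat (length ps) (length ps) (\<lambda>(r, j). ip (w r) (w j))) \<noteq> 0"
proof
  define n where "n = length ps"
  define G where "G = mat n n (\<lambda>(r, j). ip (w r) (w j))"
  have Gc: "G \<in> carrier_mat n n" unfolding G_def by simp
  assume "det (mat (length ps) (length ps) (\<lambda>(r, j). ip (w r) (w j))) = 0"
  then have "det G = 0" unfolding G_def n_def .
  then obtain v where v: "v \<in> carrier_vec n" "v \<noteq> 0\<^sub>v n" "G *\<^sub>v v = 0\<^sub>v n"
    using det_0_iff_vec_prod_zero[OF Gc] by blast
  define x where "x = (\<lambda>j. vec_index v j)"
  have wK: "w j \<in> Hs \<and> (\<forall>p. poly ((pderiv ^^ snd (ps ! j)) p) (fst (ps ! j)) = ip (polyfun Om p) (w j))"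
    if "j < n" for j
  proof -
    have "(fst (ps ! j), snd (ps ! j)) \<in> set ps" using that unfolding n_def by simp
    then show ?thesis unfolding w_def by (rule K)
  qed
  have wH: "w j \<in> Hs" if "j < n" for j using wK[OF that] by blast
  have hr: "(\<Sum>j<n. ip (w r) (w j) * x j) = 0" if r: "r < n" for r
  proof -
    have "(G *\<^sub>v v) $ r = 0" using v(3) r by simp
    moreover have "(G *\<^sub>v v) $ r = (\<Sum>j<n. ip (w r) (w j) * x j)"
      using r v(1) unfolding G_def x_def by (simp add: scalar_prod_def atLeast0LessThan)
    ultimately show ?thesis by simp
  qed
  define V where "V = (\<lambda>z. \<Sum>j\<in>{..<n}. cnj (x j) * w j z)"
  have VH: "V \<in> Hs" unfolding V_def by (rule sum_in) (auto intro: wH)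
  have ipV: "ip (w r) V = 0" if r: "r < n" for r
  proof -
    have "ip (w r) V = (\<Sum>j\<in>{..<n}. cnj (cnj (x j)) * ip (w r) (w j))"
      unfolding V_def by (rule ip_sum_right) (auto intro: wH r)
    also have "\<dots> = (\<Sum>j<n. ip (w r) (w j) * x j)" by (simp add: mult.commute)
    finally show ?thesis using hr[OF r] by simp
  qed
  have "ip V V = (\<Sum>r\<in>{..<n}. cnj (x r) * ip (w r) V)"
  proof -
    have "ip (\<lambda>z. \<Sum>j\<in>{..<n}. cnj (x j) * w j z) V = (\<Sum>r\<in>{..<n}. cnj (x r) * ip (w r) V)"
      by (rule ip_sum_left) (auto intro: wH VH)
    then show ?thesis by (simp only: V_def[symmetric])
  qed
  also have "\<dots> = 0" using ipV by simp
  finally have "V = (\<lambda>z. 0)" using ip_def0[OF VH] by simp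
  have "(\<Sum>j<n. x j * poly ((pderiv ^^ snd (ps ! j)) p) (fst (ps ! j))) = 0" for p
  proof -
    have "ip (polyfun Om p) V = (\<Sum>j\<in>{..<n}. cnj (cnj (x j)) * ip (polyfun Om p) (w j))"
      unfolding V_def by (rule ip_sum_right) (auto intro: wH poly_in)
    also have "\<dots> = (\<Sum>j<n. x j * poly ((pderiv ^^ snd (ps ! j)) p) (fst (ps ! j)))"
      using wK by (intro sum.cong) auto
    finally show ?thesis using \<open>V = (\<lambda>z. 0)\<close> ip_zero_right[OF poly_in] by simp
  qed
  moreover obtain j0 where j0: "j0 < n" "x j0 \<noteq> 0"
  proof -
    have "\<not> (\<forall>j<n. v $ j = 0)"
    proof
      assume "\<forall>j<n. v $ j = 0"
      then have "v = 0\<^sub>v n" using v(1) by (intro eq_vecI) auto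
      then show False using v(2) by simp
    qed
    then show ?thesis using that unfolding x_def by blast
  qed
  ultimately show False using hermite_indep[OF dist, of j0 x] unfolding n_def by auto
qed


lemma formal_det_in:
  assumes "u \<in> Hs" "\<And>v. v \<in> set vs \<Longrightarrow> v \<in> Hs"
  shows "formal_det ip u vs \<in> Hs"
proof -
  have ws: "(u # vs) ! i \<in> Hs" if "i \<in> {..length vs}" for i
    using that assms by (cases i) (auto simp: nth_mem)
  show ?thesis unfolding formal_det_def Let_def
    by (rule sum_in) (use ws in auto)
qed

lemma formal_det_ip:
  assumes u: "u \<in> Hs" and vs: "\<And>v. v \<in> set vs \<Longrightarrow> v \<in> Hs" and K: "K \<in> Hs"
  shows "ip (formal_det ip u vs) K =
     det (mat (Suc (length vs)) (Suc (length vs))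
        (\<lambda>(r, j). if j = 0 then ip ((u # vs) ! r) K else ip ((u # vs) ! r) (vs ! (j - 1))))"
proof -
  define N where "N = length vs"
  define ws where "ws = u # vs"
  define A where "A = mat (Suc N) (Suc N) (\<lambda>(r, j). if j = 0 then ip (ws ! r) K else ip (ws ! r) (vs ! (j - 1)))"
  define c where "c = (\<lambda>i. (-1) ^ i * ldet N (\<lambda>r j. ip (ws ! (if r < i then r else Suc r)) (vs ! j)))"
  have wsH: "ws ! i \<in> Hs" if "i \<in> {..N}" for i
    using that u vs unfolding ws_def N_def by (cases i) (auto simp: nth_mem)
  have fd: "formal_det ip u vs = (\<lambda>z. \<Sum>i\<in>{..N}. c i * (ws ! i) z)"
    unfolding formal_det_def Let_def c_def ws_def N_def ..
  have "ip (formal_det ip u vs) K = (\<Sum>i\<in>{..N}. c i * ip (ws ! i) K)"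
    unfolding fd by (rule ip_sum_left) (use wsH K in auto)
  also have "\<dots> = (\<Sum>i<Suc N. A $$ (i, 0) * cofactor A i 0)"
    unfolding lessThan_Suc_atMost
  proof (rule sum.cong[OF refl])
    fix i assume i: "i \<in> {..N}"
    have md: "mat_delete A i 0 = mat N N (\<lambda>(r, j). ip (ws ! (if r < i then r else Suc r)) (vs ! j))"
    proof (rule eq_matI)
      fix r j assume rj: "r < dim_row (mat N N (\<lambda>(r, j). ip (ws ! (if r < i then r else Suc r)) (vs ! j)))"
        "j < dim_col (mat N N (\<lambda>(r, j). ip (ws ! (if r < i then r else Suc r)) (vs ! j)))"
      then have "r < N" "j < N" by auto
      then show "mat_delete A i 0 $$ (r, j) = mat N N (\<lambda>(r, j). ip (ws ! (if r < i then r else Suc r)) (vs ! j)) $$ (r, j)"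
        unfolding mat_delete_def A_def using i by auto
    qed (auto simp: mat_delete_def A_def)
    have "A $$ (i, 0) = ip (ws ! i) K" unfolding A_def using i by auto
    moreover have "cofactor A i 0 = (-1) ^ i * ldet N (\<lambda>r j. ip (ws ! (if r < i then r else Suc r)) (vs ! j))"
      unfolding cofactor_def md ldet_det by simp
    ultimately show "c i * ip (ws ! i) K = A $$ (i, 0) * cofactor A i 0" unfolding c_def by simp
  qed
  also have "\<dots> = det A" by (rule laplace_expansion_column[symmetric]) (auto simp: A_def)
  finally show ?thesis unfolding A_def ws_def N_def .
qed


theorem main_loc:
  assumes RM: "reproducible_multiset Om Hs ip Z"
  shows "(\<forall>l < count Z 0. (deriv ^^ l) (shapiro_shields Om Hs ip Z) 0 = 0) \<and>
         (deriv ^^ count Z 0) (shapiro_shields Om Hs ip Z) 0 \<noteq> 0"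
proof -
  define m0 where "m0 = count Z 0"
  define bs where "bs = (SOME bs. distinct bs \<and> set bs = set_mset Z - {0})"
  have bs: "distinct bs \<and> set bs = set_mset Z - {0}" unfolding bs_def
    by (rule someI_ex) (use finite_distinct_list[of "set_mset Z - {0}"] in auto)
  define k where "k = kern Om Hs ip"
  define u where "u = k 0 m0"
  define vs where "vs = rev (map (k 0) [0..<m0]) @ concat (map (\<lambda>b. rev (map (k b) [0..<count Z b])) bs)"
  have SS: "shapiro_shields Om Hs ip Z = formal_det ip u vs"
    unfolding shapiro_shields_def Let_def u_def vs_def k_def m0_def bs_def ..
  define ps where "ps = rev (map (Pair 0) [0..<Suc m0]) @ concat (map (\<lambda>b. rev (map (Pair b) [0..<count Z b])) bs)"
  define kf where "kf = (\<lambda>x. k (fst x) (snd x))"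
  have ws: "u # vs = map kf ps"
    unfolding u_def vs_def ps_def kf_def by (simp add: map_concat rev_map comp_def)
  have psset: "(b = 0 \<and> a \<le> m0) \<or> (b \<in> set bs \<and> a < count Z b)" if "(b, a) \<in> set ps" for b a
    using that unfolding ps_def by auto
  have Kp: "k b a \<in> Hs \<and> (\<forall>p. poly ((pderiv ^^ a) p) b = ip (polyfun Om p) (k b a))"
    if "(b, a) \<in> set ps" for b a
  proof (cases "b = 0")
    case True
    have "kern Om Hs ip 0 a \<in> Hs \<and> (\<forall>f\<in>Hs. (deriv ^^ a) f 0 = ip f (kern Om Hs ip 0 a))" by (rule kern0)
    then show ?thesis unfolding k_def True using polyfun_higher_deriv0 poly_in by metis
  next
    case False
    then have "b \<in> set bs" "a < count Z b" using psset[OF that] by auto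
    then have "b \<in># Z" using bs by auto
    then have "reproducible Om Hs ip b a"
      using multiset_reproducible[OF RM _ False \<open>a < count Z b\<close>] by blast
    then show ?thesis unfolding k_def by (rule kern_reproducible)
  qed
  have dist: "distinct ps"
  proof -
    have "distinct (concat (map (\<lambda>b. rev (map (Pair b) [0..<count Z b])) bs))"
      using bs distinct_concat_pairs by blast
    moreover have "0 \<notin> set bs" using bs by auto
    ultimately show ?thesis unfolding ps_def by (auto simp: distinct_map inj_on_def)
  qed
  define N where "N = length vs"
  have lps: "length ps = Suc N" using arg_cong[OF ws, of length] unfolding N_def by simp
  have wsnth: "(u # vs) ! i = kf (ps ! i)" if "i < Suc N" for i
    using ws that lps by (metis nth_map)
  have wsH: "(u # vs) ! i \<in> Hs" if "i < Suc N" for i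
  proof -
    have "ps ! i \<in> set ps" using that lps by simp
    then have "(fst (ps ! i), snd (ps ! i)) \<in> set ps" by simp
    then show ?thesis unfolding wsnth[OF that] kf_def using Kp by blast
  qed
  have uH: "u \<in> Hs" using wsH[of 0] by simp
  have vsH: "v \<in> Hs" if vin: "v \<in> set vs" for v
  proof -
    obtain i where "i < N" "v = vs ! i" using vin[unfolded in_set_conv_nth] unfolding N_def by blast
    then show ?thesis using wsH[of "Suc i"] by simp
  qed
  have SH: "formal_det ip u vs \<in> Hs" by (rule formal_det_in[OF uH vsH])
  have deriv_eq: "(deriv ^^ l) (shapiro_shields Om Hs ip Z) 0 =
       det (mat (Suc N) (Suc N) (\<lambda>(r, j). if j = 0 then ip ((u # vs) ! r) (k 0 l) else ip ((u # vs) ! r) (vs ! (j - 1))))"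
    for l
  proof -
    have kH: "k 0 l \<in> Hs" and kd: "\<forall>f\<in>Hs. (deriv ^^ l) f 0 = ip f (k 0 l)"
      using kern0[of l] unfolding k_def by auto
    have "(deriv ^^ l) (shapiro_shields Om Hs ip Z) 0 = ip (formal_det ip u vs) (k 0 l)"
      unfolding SS using kd SH by blast
    also have "\<dots> = det (mat (Suc N) (Suc N) (\<lambda>(r, j). if j = 0 then ip ((u # vs) ! r) (k 0 l) else ip ((u # vs) ! r) (vs ! (j - 1))))"
      unfolding N_def by (rule formal_det_ip[OF uH vsH kH])
    finally show ?thesis .
  qed
  have lvs: "m0 \<le> N" unfolding N_def vs_def by simp
  have part1: "(deriv ^^ l) (shapiro_shields Om Hs ip Z) 0 = 0" if l: "l < m0" for l
  proof -
    define A where "A = mat (Suc N) (Suc N) (\<lambda>(r, j). if j = 0 then ip ((u # vs) ! r) (k 0 l) else ip ((u # vs) ! r) (vs ! (j - 1)))"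
    have vsl: "vs ! (m0 - 1 - l) = k 0 l"
    proof -
      have "vs ! (m0 - 1 - l) = rev (map (k 0) [0..<m0]) ! (m0 - 1 - l)"
        unfolding vs_def using l by (simp add: nth_append)
      also have "\<dots> = k 0 l" using l by (simp add: rev_nth)
      finally show ?thesis .
    qed
    have "det A = 0"
    proof (rule det_identical_columns[of A "Suc N" 0 "m0 - l"])
      show "A \<in> carrier_mat (Suc N) (Suc N)" unfolding A_def by simp
      show "0 \<noteq> m0 - l" using l by simp
      show "0 < Suc N" by simp
      show "m0 - l < Suc N" using lvs by simp
      show "col A 0 = col A (m0 - l)"
      proof (rule eq_vecI)
        fix r assume "r < dim_vec (col A (m0 - l))"
        then have r: "r < Suc N" unfolding A_def by simp
        have "m0 - l - 1 = m0 - 1 - l" by simp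
        then show "col A 0 $ r = col A (m0 - l) $ r"
          using r lvs l vsl unfolding A_def by (simp add: col_def)
      qed (simp add: A_def)
    qed
    then show ?thesis using deriv_eq[of l] unfolding A_def by simp
  qed
  have part2: "(deriv ^^ m0) (shapiro_shields Om Hs ip Z) 0 \<noteq> 0"
  proof -
    define w where "w = (\<lambda>j. kern Om Hs ip (fst (ps ! j)) (snd (ps ! j)))"
    have wj: "w j = (u # vs) ! j" if "j < Suc N" for j
      unfolding w_def wsnth[OF that] kf_def k_def ..
    have eqm: "mat (Suc N) (Suc N) (\<lambda>(r, j). if j = 0 then ip ((u # vs) ! r) (k 0 m0) else ip ((u # vs) ! r) (vs ! (j - 1)))
        = mat (length ps) (length ps) (\<lambda>(r, j). ip (w r) (w j))"
    proof (rule eq_matI)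
      fix r j assume rj: "r < dim_row (mat (length ps) (length ps) (\<lambda>(r, j). ip (w r) (w j)))"
        "j < dim_col (mat (length ps) (length ps) (\<lambda>(r, j). ip (w r) (w j)))"
      then have r: "r < Suc N" and j: "j < Suc N" using lps by auto
      show "mat (Suc N) (Suc N) (\<lambda>(r, j). if j = 0 then ip ((u # vs) ! r) (k 0 m0) else ip ((u # vs) ! r) (vs ! (j - 1))) $$ (r, j)
          = mat (length ps) (length ps) (\<lambda>(r, j). ip (w r) (w j)) $$ (r, j)"
      proof (cases j)
        case 0 then show ?thesis using r j lps wj[OF r] wj[of 0] unfolding u_def by simp
      next
        case (Suc j') then show ?thesis using r j lps wj[OF r] wj[OF j] by simp
      qed
    qed (use lps in auto)
    have "det (mat (length ps) (length ps) (\<lambda>(r, j). ip (w r) (w j))) \<noteq> 0"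
      unfolding w_def
    proof (rule gram_det_nonzero[OF dist])
      fix b a assume "(b, a) \<in> set ps"
      then show "kern Om Hs ip b a \<in> Hs \<and> (\<forall>p. poly ((pderiv ^^ a) p) b = ip (polyfun Om p) (kern Om Hs ip b a))"
        using Kp unfolding k_def by blast
    qed
    then show ?thesis using deriv_eq[of m0] eqm by simp
  qed
  show ?thesis using part1 part2 unfolding m0_def by blast
qed


end

theorem mainTheorem12:
  assumes "analytic_hilbert Om Hs ip"
    and "reproducible_multiset Om Hs ip Z"
  shows "(\<forall>l < count Z 0. (deriv ^^ l) (shapiro_shields Om Hs ip Z) 0 = 0) \<and>
         (deriv ^^ count Z 0) (shapiro_shields Om Hs ip Z) 0 \<noteq> 0"
proof -
  interpret AH Om Hs ip by (rule AH.intro) (rule assms(1))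
  show ?thesis by (rule main_loc[OF assms(2)])
qed

end
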